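(* Let $D\ge1$, $p>0$, $b\ge 1$ an integer, and $u,v\in\mathbb{R}^D$ nonzero. Let $(i^*_u,t^*_u)$ and $(i^*_v,t^*_v)$ be the GCWS outputs for $u$ and $v$ computed with shared random numbers (as described in the context). Let $g$ be a random function from $\{1,\dots,2D\}\times\mathbb{Z}$ to $\{0,1,\dots,2^b-1\}$ whose values $g(x)$, $x\in\{1,\dots,2D\}\times\mathbb{Z}$, are independent and uniformly distributed, with $g$ independent of the GCWS randomness, and write $(i^*,t^* )_b=g(i^*,t^* )$. Then $$P\big[(i^*_u,t^*_u)_b=(i^*_v,t^*_v)_b\big]=\textit{pGMM}(u,v;p)+\frac{1}{2^b}\big\{1-\textit{pGMM}(u,v;p)\big\}.$$
   Context: Sign-splitting transformation: for $u\in\mathbb{R}^D$, define $\tilde u\in\mathbb{R}^{2D}$ by, for each $i$: if $u_i>0$ then $\tilde u_{2i-1}=u_i,\tilde u_{2i}=0$; if $u_i\le 0$ then $\tilde u_{2i-1}=0,\tilde u_{2i}=-u_i$. $\textit{pGMM}(u,v;p)=\sum_{i=1}^{2D}(\min\{\tilde u_i,\tilde v_i\})^p/\sum_{i=1}^{2D}(\max\{\tilde u_i,\tilde v_i\})^p$. GCWS procedure: draw independently for $i=1,\dots,2D$: $r_i\sim\mathrm{Gamma}(2,1)$, $c_i\sim\mathrm{Gamma}(2,1)$, $\beta_i\sim\mathrm{Uniform}(0,1)$. For each $i$ with $\tilde u_i>0$ set $t_i=\lfloor p\log(\tilde u_i)/r_i+\beta_i\rfloor$ and $a_i=\log(c_i)-r_i(t_i+1-\beta_i)$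 (indices with $\tilde u_i=0$ are skipped). Output $i^*=\arg\min_i a_i$, $t^*=t_{i^*}$. The same $r_i,c_i,\beta_i$ are used for $v$. *)

theory Defs
  imports "HOL-Probability.Probability"
begin

text \<open>Vectors u in R^D are functions nat => real, coordinates 0..D-1 (0-based).
  Split vector coordinates 0..2D-1: coordinate 2i is the paper's 2i-1, 2i+1 is the paper's 2i.\<close>

definition sign_split :: "(nat \<Rightarrow> real) \<Rightarrow> nat \<Rightarrow> real" where
  "sign_split u k = (if even k then (if u (k div 2) > 0 then u (k div 2) else 0)
                     else (if u (k div 2) > 0 then 0 else - u (k div 2)))"

definition pGMM :: "nat \<Rightarrow> (nat \<Rightarrow> real) \<Rightarrow> (nat \<Rightarrow> real) \<Rightarrow> real \<Rightarrow> real" where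
  "pGMM D u v p =
     (\<Sum>k<2*D. (min (sign_split u k) (sign_split v k)) powr p) /
     (\<Sum>k<2*D. (max (sign_split u k) (sign_split v k)) powr p)"

definition gcws_t :: "real \<Rightarrow> (nat \<Rightarrow> real) \<Rightarrow> (nat \<Rightarrow> real) \<Rightarrow> (nat \<Rightarrow> real) \<Rightarrow> nat \<Rightarrow> int" where
  "gcws_t p u r beta k = \<lfloor>p * ln (sign_split u k) / r k + beta k\<rfloor>"

definition gcws_a :: "real \<Rightarrow> (nat \<Rightarrow> real) \<Rightarrow> (nat \<Rightarrow> real) \<Rightarrow> (nat \<Rightarrow> real) \<Rightarrow> (nat \<Rightarrow> real) \<Rightarrow> nat \<Rightarrow> real" where
  "gcws_a p u r c beta k = ln (c k) - r k * (real_of_int (gcws_t p u r beta k) + 1 - beta k)"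

definition gcws_i :: "nat \<Rightarrow> real \<Rightarrow> (nat \<Rightarrow> real) \<Rightarrow> (nat \<Rightarrow> real) \<Rightarrow> (nat \<Rightarrow> real) \<Rightarrow> (nat \<Rightarrow> real) \<Rightarrow> nat" where
  "gcws_i D p u r c beta = (ARG_MIN (gcws_a p u r c beta) k. k < 2*D \<and> sign_split u k > 0)"

definition gcws :: "nat \<Rightarrow> real \<Rightarrow> (nat \<Rightarrow> real) \<Rightarrow> (nat \<Rightarrow> real) \<Rightarrow> (nat \<Rightarrow> real) \<Rightarrow> (nat \<Rightarrow> real) \<Rightarrow> nat \<times> int" where
  "gcws D p u r c beta = (let i = gcws_i D p u r c beta in (i, gcws_t p u r beta i))"

text \<open>Index type for all random variables: r_k, c_k, beta_k, and the values g(k,t) of the hash g.\<close>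

datatype rv_idx = RI nat | CI nat | BI nat | GI nat int

definition rv_indices :: "nat \<Rightarrow> rv_idx set" where
  "rv_indices D = {RI k | k. k < 2*D} \<union> {CI k | k. k < 2*D} \<union> {BI k | k. k < 2*D}
                  \<union> {GI k t | k t. k < 2*D}"

end

theory Submission
  imports Defs "HOL-Real_Asymp.Real_Asymp"
begin

lemma C0: "(\<integral>\<^sup>+x. ennreal (exp (-x)) * indicator {L..} x \<partial>lborel) = ennreal (exp (-L))"
proof -
  have "(\<integral>\<^sup>+x. ennreal (exp (-x)) * indicator {L..} x \<partial>lborel) = 0 - (- exp (-L))"
    by (rule nn_integral_FTC_atLeast[where F="\<lambda>x. - exp (-x)"])
       (auto intro!: derivative_eq_intros, real_asymp)
  then show ?thesis by simp
qed

lemma C1: assumes a: "a > 0"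
  shows "(\<integral>\<^sup>+c. ennreal (c * exp (- a * c)) * indicator {0..} c \<partial>lborel) = ennreal (1 / a^2)"
proof -
  have "(\<integral>\<^sup>+c. ennreal (c * exp (- a * c)) * indicator {0..} c \<partial>lborel)
      = 0 - (- (0 / a + 1 / a^2) * exp (- a * 0))"
    apply (rule nn_integral_FTC_atLeast[where F="\<lambda>c. - (c / a + 1 / a^2) * exp (- a * c)"])
    using a apply (auto intro!: derivative_eq_intros simp: field_simps power2_eq_square)
    using a by real_asymp
  then show ?thesis by simp
qed

lemma C2: assumes k: "\<kappa> \<ge> 0"
  shows "(\<integral>\<^sup>+y. ennreal (exp (-y) / (1 + \<kappa> * exp (-y))^2) * indicator {0..} y \<partial>lborel)
     = ennreal (1 / (1 + \<kappa>))"
proof -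
  have "(\<integral>\<^sup>+y. ennreal (exp (-y) / (1 + \<kappa> * exp (-y))^2) * indicator {0..} y \<partial>lborel)
      = 0 - (- 1 / (exp 0 + \<kappa>))"
  proof (rule nn_integral_FTC_atLeast[where F="\<lambda>y. - 1 / (exp y + \<kappa>)"])
    fix x :: real
    have p: "exp x + \<kappa> > 0" using k by (smt (verit) exp_gt_zero)
    have e: "exp (-x) / (1 + \<kappa> * exp (-x))^2 = exp x / (exp x + \<kappa>)^2"
      using p by (simp add: exp_minus field_simps power2_eq_square)
    show "((\<lambda>y. - 1 / (exp y + \<kappa>)) has_real_derivative exp (-x) / (1 + \<kappa> * exp (-x))^2) (at x)"
      unfolding e using p by (auto intro!: derivative_eq_intros simp: power2_eq_square field_simps)
  next
    show "((\<lambda>y. - 1 / (exp y + \<kappa>)) \<longlongrightarrow> 0) at_top" using k by real_asymp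
  qed (auto)
  then show ?thesis by simp
qed

lemma C3: assumes "s \<ge> 0"
  shows "(\<integral>\<^sup>+c. ennreal (c * exp (- c)) * indicator {s..} c \<partial>lborel) = ennreal ((1 + s) * exp (- s))"
proof -
  have "(\<integral>\<^sup>+c. ennreal (c * exp (- c)) * indicator {s..} c \<partial>lborel) = 0 - (- (1 + s) * exp (- s))"
    apply (rule nn_integral_FTC_atLeast[where F="\<lambda>c. - (1 + c) * exp (- c)"])
    using assms apply (auto intro!: derivative_eq_intros simp: field_simps)
    by real_asymp
  moreover have "0 - (- (1 + s) * exp (- s)) = (1 + s) * exp (- s)" by (simp add: algebra_simps)
  ultimately show ?thesis by (simp only:)
qed

lemma C4: assumes K: "K > 0"
  shows "(\<integral>\<^sup>+y. ennreal (exp (-y) * (1 + K * exp y) * exp (- K * exp y)) * indicator {0..} y \<partial>lborel)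
     = ennreal (exp (- K))"
proof -
  have "(\<integral>\<^sup>+y. ennreal (exp (-y) * (1 + K * exp y) * exp (- K * exp y)) * indicator {0..} y \<partial>lborel)
      = 0 - (- exp (-0) * exp (- K * exp 0))"
    apply (rule nn_integral_FTC_atLeast[where F="\<lambda>y. - exp (-y) * exp (- K * exp y)"])
    using K apply (auto intro!: derivative_eq_intros simp: field_simps exp_minus)
    using K by real_asymp
  then show ?thesis by simp
qed

lemma lborel_shift:
  fixes f :: "real \<Rightarrow> ennreal"
  assumes [measurable]: "f \<in> borel_measurable borel"
  shows "(\<integral>\<^sup>+x. f (c + x) \<partial>lborel) = (\<integral>\<^sup>+x. f x \<partial>lborel)"
proof -
  have "(\<integral>\<^sup>+x. f x \<partial>lborel) = (\<integral>\<^sup>+x. f x \<partial>(distr lborel borel ((+) c)))"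
    by (simp add: lborel_distr_plus)
  also have "\<dots> = (\<integral>\<^sup>+x. f (c + x) \<partial>lborel)"
    by (subst nn_integral_distr) auto
  finally show ?thesis by simp
qed

lemma ind_Icc_Ico_AE:
  fixes h :: "real \<Rightarrow> ennreal"
  shows "(\<integral>\<^sup>+x. h x * indicator {a..b} x \<partial>lborel) = (\<integral>\<^sup>+x. h x * indicator {a..<b} x \<partial>lborel)"
  by (intro nn_integral_cong_AE eventually_mono[OF AE_lborel_singleton[of b]]) (auto simp: indicator_def)

lemma frac_shift_integral:
  fixes h :: "real \<Rightarrow> ennreal"
  assumes [measurable]: "h \<in> borel_measurable borel"
  shows "(\<integral>\<^sup>+b. h (frac (x + b)) * indicator {0..1} b \<partial>lborel) = (\<integral>\<^sup>+u. h u * indicator {0..1} u \<partial>lborel)"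
proof -
  define \<theta> where "\<theta> = frac x"
  have th: "0 \<le> \<theta>" "\<theta> < 1" unfolding \<theta>_def by (auto simp: frac_lt_1)
  have pw: "h (frac (x + b)) * indicator {0..<1} b =
      h (\<theta> + b) * indicator {0..<1-\<theta>} b + h (\<theta> + b - 1) * indicator {1-\<theta>..<1} b" for b
  proof (cases "0 \<le> b \<and> b < 1")
    case True
    then have fb: "frac b = b" by (simp add: frac_eq)
    have "frac (x + b) = (if \<theta> + b < 1 then \<theta> + b else \<theta> + b - 1)"
      using frac_add[of x b] unfolding fb \<theta>_def .
    then show ?thesis using True by (auto simp: indicator_def)
  next
    case False
    then show ?thesis using th by (auto simp: indicator_def)
  qed
  have "(\<integral>\<^sup>+b. h (frac (x + b)) * indicator {0..1} b \<partial>lborel) =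
        (\<integral>\<^sup>+b. h (frac (x + b)) * indicator {0..<1} b \<partial>lborel)"
    by (rule ind_Icc_Ico_AE)
  also have "\<dots> = (\<integral>\<^sup>+b. h (\<theta> + b) * indicator {0..<1-\<theta>} b \<partial>lborel) +
                  (\<integral>\<^sup>+b. h (\<theta> + b - 1) * indicator {1-\<theta>..<1} b \<partial>lborel)"
    unfolding pw by (rule nn_integral_add) auto
  also have "(\<integral>\<^sup>+b. h (\<theta> + b) * indicator {0..<1-\<theta>} b \<partial>lborel) =
             (\<integral>\<^sup>+b. (\<lambda>u. h u * indicator {\<theta>..<1} u) (\<theta> + b) \<partial>lborel)"
    by (intro nn_integral_cong) (auto simp: indicator_def)
  also have "\<dots> = (\<integral>\<^sup>+u. h u * indicator {\<theta>..<1} u \<partial>lborel)"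
    by (rule lborel_shift) auto
  also have "(\<integral>\<^sup>+b. h (\<theta> + b - 1) * indicator {1-\<theta>..<1} b \<partial>lborel) =
             (\<integral>\<^sup>+b. (\<lambda>u. h u * indicator {0..<\<theta>} u) ((\<theta> - 1) + b) \<partial>lborel)"
    by (intro nn_integral_cong) (simp add: indicator_def diff_add_eq add_diff_eq add.commute)
  also have "\<dots> = (\<integral>\<^sup>+u. h u * indicator {0..<\<theta>} u \<partial>lborel)"
    by (rule lborel_shift) auto
  also have "(\<integral>\<^sup>+u. h u * indicator {\<theta>..<1} u \<partial>lborel) + (\<integral>\<^sup>+u. h u * indicator {0..<\<theta>} u \<partial>lborel)
      = (\<integral>\<^sup>+u. h u * indicator {\<theta>..<1} u + h u * indicator {0..<\<theta>} u \<partial>lborel)"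
    by (rule nn_integral_add[symmetric]) auto
  also have "\<dots> = (\<integral>\<^sup>+u. h u * indicator {0..<1} u \<partial>lborel)"
    using th by (intro nn_integral_cong) (auto simp: indicator_def)
  also have "\<dots> = (\<integral>\<^sup>+u. h u * indicator {0..1} u \<partial>lborel)"
    by (rule ind_Icc_Ico_AE[symmetric])
  finally show ?thesis .
qed

lemma erlang11: "erlang_density 1 1 r = (if r < 0 then 0 else r * exp (- r))"
  by (simp add: erlang_density_def)

lemma measurable_H2:
  fixes H :: "real \<Rightarrow> real \<Rightarrow> ennreal"
  assumes Hm: "(\<lambda>p. H (fst p) (snd p)) \<in> borel_measurable (borel \<Otimes>\<^sub>M borel)"
    and f[measurable]: "f \<in> N \<rightarrow>\<^sub>M borel" and g[measurable]: "g \<in> N \<rightarrow>\<^sub>M borel"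
  shows "(\<lambda>x. H (f x) (g x)) \<in> borel_measurable N"
proof -
  have "(\<lambda>x. (f x, g x)) \<in> N \<rightarrow>\<^sub>M borel \<Otimes>\<^sub>M borel" by measurable
  from measurable_compose[OF this Hm] show ?thesis by (simp add: comp_def)
qed

lemma split_gamma:
  fixes H :: "real \<Rightarrow> real \<Rightarrow> ennreal"
  assumes Hm[measurable]: "(\<lambda>p. H (fst p) (snd p)) \<in> borel_measurable (borel \<Otimes>\<^sub>M borel)"
  shows "(\<integral>\<^sup>+r. ennreal (erlang_density 1 1 r) * (\<integral>\<^sup>+u. H (r*u) (r - r*u) * indicator {0..1} u \<partial>lborel) \<partial>lborel)
       = (\<integral>\<^sup>+x. ennreal (exp (-x)) * indicator {0..} x * (\<integral>\<^sup>+y. ennreal (exp (-y)) * indicator {0..} y * H x y \<partial>lborel) \<partial>lborel)"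
proof -

  note HM[measurable] = measurable_H2[OF Hm]
  have Hm2: "H x \<in> borel_measurable borel" for x
  proof -
    have "(\<lambda>y. (x, y)) \<in> borel \<rightarrow>\<^sub>M borel \<Otimes>\<^sub>M borel" by measurable
    from measurable_compose[OF this Hm] show ?thesis by (simp add: comp_def)
  qed
  have H2[measurable]: "(\<lambda>p. H (snd p) (fst p - snd p)) \<in> borel_measurable (borel \<Otimes>\<^sub>M borel)"
  proof -
    have "(\<lambda>p. (snd p, fst p - snd p)) \<in> (borel \<Otimes>\<^sub>M borel) \<rightarrow>\<^sub>M (borel \<Otimes>\<^sub>M borel :: (real \<times> real) measure)" by measurable
    from measurable_compose[OF this Hm] show ?thesis by (simp add: comp_def)
  qed
  have step1: "ennreal (erlang_density 1 1 r) * (\<integral>\<^sup>+u. H (r*u) (r - r*u) * indicator {0..1} u \<partial>lborel)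
      = ennreal (exp (-r)) * indicator {0..} r * (\<integral>\<^sup>+x. H x (r - x) * indicator {0..r} x \<partial>lborel)"
    if "r \<noteq> 0" for r
  proof (cases "r < 0")
    case True then show ?thesis by (simp add: erlang_density_def)
  next
    case False
    then have r: "r > 0" using that by simp
    have "(\<integral>\<^sup>+x. H x (r - x) * indicator {0..r} x \<partial>lborel)
        = ennreal \<bar>r\<bar> * (\<integral>\<^sup>+u. H (0 + r*u) (r - (0 + r*u)) * indicator {0..r} (0 + r*u) \<partial>lborel)"
    proof (rule nn_integral_real_affine)
      have [measurable]: "(\<lambda>x. H x (r - x)) \<in> borel_measurable borel" by (rule measurable_H2[OF Hm]) auto
      show "(\<lambda>x. H x (r - x) * indicator {0..r} x) \<in> borel_measurable borel" by measurable
    qed (use r in auto)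
    also have "(\<integral>\<^sup>+u. H (0 + r*u) (r - (0 + r*u)) * indicator {0..r} (0 + r*u) \<partial>lborel)
        = (\<integral>\<^sup>+u. H (r*u) (r - r*u) * indicator {0..1} u \<partial>lborel)"
      using r by (intro nn_integral_cong) (auto simp: indicator_def zero_le_mult_iff mult_le_cancel_left1)
    finally have eq: "(\<integral>\<^sup>+x. H x (r - x) * indicator {0..r} x \<partial>lborel)
        = ennreal r * (\<integral>\<^sup>+u. H (r*u) (r - r*u) * indicator {0..1} u \<partial>lborel)" using r by simp
    have ge: "ennreal (erlang_density 1 1 r) = ennreal r * ennreal (exp (-r))"
      using r by (simp add: erlang_density_def ennreal_mult)
    show ?thesis unfolding eq ge using r by (simp add: mult_ac)
  qed
  have "(\<integral>\<^sup>+r. ennreal (erlang_density 1 1 r) * (\<integral>\<^sup>+u. H (r*u) (r - r*u) * indicator {0..1} u \<partial>lborel) \<partial>lborel)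
     = (\<integral>\<^sup>+r. ennreal (exp (-r)) * indicator {0..} r * (\<integral>\<^sup>+x. H x (r - x) * indicator {0..r} x \<partial>lborel) \<partial>lborel)"
    by (intro nn_integral_cong_AE eventually_mono[OF AE_lborel_singleton[of 0]] step1)
  also have "\<dots> = (\<integral>\<^sup>+r. (\<integral>\<^sup>+x. ennreal (exp (-r)) * indicator {0..} r * (H x (r - x) * indicator {0..r} x) \<partial>lborel) \<partial>lborel)"
    by (intro nn_integral_cong nn_integral_cmult[symmetric]) measurable
  also have "\<dots> = (\<integral>\<^sup>+x. (\<integral>\<^sup>+r. ennreal (exp (-r)) * indicator {0..} r * (H x (r - x) * indicator {0..r} x) \<partial>lborel) \<partial>lborel)"
  proof (rule lborel_pair.Fubini'[symmetric])
    show "(\<lambda>(r, x). ennreal (exp (- r)) * indicator {0..} r * (H x (r - x) * indicator {0..r} x)) \<in> borel_measurable (lborel \<Otimes>\<^sub>M lborel)"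
      unfolding indicator_def by (simp add: case_prod_beta') measurable
  qed
  also have "\<dots> = (\<integral>\<^sup>+x. ennreal (exp (-x)) * indicator {0..} x * (\<integral>\<^sup>+y. ennreal (exp (-y)) * indicator {0..} y * H x y \<partial>lborel) \<partial>lborel)"
  proof (intro nn_integral_cong)
    fix x :: real
    have "(\<integral>\<^sup>+r. ennreal (exp (-r)) * indicator {0..} r * (H x (r - x) * indicator {0..r} x) \<partial>lborel)
        = (\<integral>\<^sup>+y. (\<lambda>r. ennreal (exp (-r)) * indicator {0..} r * (H x (r - x) * indicator {0..r} x)) (x + y) \<partial>lborel)"
      by (rule lborel_shift[symmetric]) (unfold indicator_def atLeastAtMost_iff, measurable)
    also have "\<dots> = (\<integral>\<^sup>+y. (ennreal (exp (-x)) * indicator {0..} x) * (ennreal (exp (-y)) * indicator {0..} y * H x y) \<partial>lborel)"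
    proof (intro nn_integral_cong)
      fix y :: real
      have e: "ennreal (exp (- x - y)) = ennreal (exp (- x)) * ennreal (exp (- y))"
        by (simp add: ennreal_mult[symmetric] mult_exp_exp)
      show "(\<lambda>r. ennreal (exp (-r)) * indicator {0..} r * (H x (r - x) * indicator {0..r} x)) (x + y) =
         (ennreal (exp (-x)) * indicator {0..} x) * (ennreal (exp (-y)) * indicator {0..} y * H x y)"
        by (auto simp: indicator_def e mult_ac)
    qed
    also have "\<dots> = ennreal (exp (-x)) * indicator {0..} x * (\<integral>\<^sup>+y. ennreal (exp (-y)) * indicator {0..} y * H x y \<partial>lborel)"
      by (rule nn_integral_cmult) measurable
    finally show "(\<integral>\<^sup>+r. ennreal (exp (-r)) * indicator {0..} r * (H x (r - x) * indicator {0..r} x) \<partial>lborel)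
        = ennreal (exp (-x)) * indicator {0..} x * (\<integral>\<^sup>+y. ennreal (exp (-y)) * indicator {0..} y * H x y \<partial>lborel)" .
  qed
  finally show ?thesis .
qed

definition tq :: "real \<Rightarrow> real \<Rightarrow> real \<Rightarrow> int" where
  "tq lw r b = \<lfloor>lw / r + b\<rfloor>"

definition dq :: "real \<Rightarrow> real \<Rightarrow> real \<Rightarrow> real" where
  "dq lw r b = lw - r * (real_of_int (tq lw r b) - b)"

lemma dq_frac: "r \<noteq> 0 \<Longrightarrow> dq lw r b = r * frac (lw / r + b)"
  by (simp add: dq_def tq_def frac_def algebra_simps)

lemma measurable_tq[measurable (raw)]:
  "f \<in> N \<rightarrow>\<^sub>M borel \<Longrightarrow> g \<in> N \<rightarrow>\<^sub>M borel \<Longrightarrow> h \<in> N \<rightarrow>\<^sub>M borel \<Longrightarrow>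
   (\<lambda>x. tq (f x) (g x) (h x)) \<in> N \<rightarrow>\<^sub>M count_space UNIV"
  unfolding tq_def by measurable

lemma measurable_dq[measurable (raw)]:
  "f \<in> N \<rightarrow>\<^sub>M borel \<Longrightarrow> g \<in> N \<rightarrow>\<^sub>M borel \<Longrightarrow> h \<in> N \<rightarrow>\<^sub>M borel \<Longrightarrow>
   (\<lambda>x. dq (f x) (g x) (h x)) \<in> borel_measurable N"
proof -
  assume [measurable]: "f \<in> N \<rightarrow>\<^sub>M borel" "g \<in> N \<rightarrow>\<^sub>M borel" "h \<in> N \<rightarrow>\<^sub>M borel"
  have [measurable]: "(\<lambda>x. real_of_int (tq (f x) (g x) (h x))) \<in> borel_measurable N"
    by (rule measurable_compose[OF measurable_tq]) (auto simp: measurable_count_space_eq1)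
  show ?thesis unfolding dq_def by measurable
qed

lemma expect_split:
  fixes \<Phi> :: "real \<Rightarrow> real \<Rightarrow> ennreal"
  assumes Hm[measurable]: "(\<lambda>p. \<Phi> (fst p) (snd p)) \<in> borel_measurable (borel \<Otimes>\<^sub>M borel)"
  shows "(\<integral>\<^sup>+r. ennreal (erlang_density 1 1 r) * (\<integral>\<^sup>+b. \<Phi> (dq lw r b) (r - dq lw r b) * indicator {0..1} b \<partial>lborel) \<partial>lborel)
       = (\<integral>\<^sup>+x. ennreal (exp (-x)) * indicator {0..} x * (\<integral>\<^sup>+y. ennreal (exp (-y)) * indicator {0..} y * \<Phi> x y \<partial>lborel) \<partial>lborel)"
proof -
  note HM[measurable] = measurable_H2[OF Hm]
  have "ennreal (erlang_density 1 1 r) * (\<integral>\<^sup>+b. \<Phi> (dq lw r b) (r - dq lw r b) * indicator {0..1} b \<partial>lborel)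
      = ennreal (erlang_density 1 1 r) * (\<integral>\<^sup>+u. \<Phi> (r*u) (r - r*u) * indicator {0..1} u \<partial>lborel)" for r
  proof (cases "r > 0")
    case True
    have "(\<integral>\<^sup>+b. \<Phi> (dq lw r b) (r - dq lw r b) * indicator {0..1} b \<partial>lborel)
        = (\<integral>\<^sup>+b. (\<lambda>u. \<Phi> (r*u) (r - r*u)) (frac (lw / r + b)) * indicator {0..1} b \<partial>lborel)"
      using True by (intro nn_integral_cong) (simp add: dq_frac)
    also have "\<dots> = (\<integral>\<^sup>+u. \<Phi> (r*u) (r - r*u) * indicator {0..1} u \<partial>lborel)"
      by (rule frac_shift_integral) measurable
    finally show ?thesis by simp
  next
    case False
    then have "erlang_density 1 1 r = 0" by (auto simp: erlang_density_def)
    then show ?thesis by simp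
  qed
  then have "(\<integral>\<^sup>+r. ennreal (erlang_density 1 1 r) * (\<integral>\<^sup>+b. \<Phi> (dq lw r b) (r - dq lw r b) * indicator {0..1} b \<partial>lborel) \<partial>lborel)
     = (\<integral>\<^sup>+r. ennreal (erlang_density 1 1 r) * (\<integral>\<^sup>+u. \<Phi> (r*u) (r - r*u) * indicator {0..1} u \<partial>lborel) \<partial>lborel)"
    by simp
  also have "\<dots> = (\<integral>\<^sup>+x. ennreal (exp (-x)) * indicator {0..} x * (\<integral>\<^sup>+y. ennreal (exp (-y)) * indicator {0..} y * \<Phi> x y \<partial>lborel) \<partial>lborel)"
    by (rule split_gamma[OF Hm])
  finally show ?thesis .
qed

definition aq :: "real \<Rightarrow> real \<Rightarrow> real \<Rightarrow> real \<Rightarrow> real" where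
  "aq lw r c b = ln c - r * (real_of_int (tq lw r b) + 1 - b)"

lemma aq_dq: "aq lw r c b = ln c - lw - (r - dq lw r b)"
  by (simp add: aq_def dq_def algebra_simps)

lemma measurable_aq[measurable (raw)]:
  "f \<in> N \<rightarrow>\<^sub>M borel \<Longrightarrow> g \<in> N \<rightarrow>\<^sub>M borel \<Longrightarrow> h \<in> N \<rightarrow>\<^sub>M borel \<Longrightarrow> k \<in> N \<rightarrow>\<^sub>M borel \<Longrightarrow>
   (\<lambda>x. aq (f x) (g x) (k x) (h x)) \<in> borel_measurable N"
proof -
  assume [measurable]: "f \<in> N \<rightarrow>\<^sub>M borel" "g \<in> N \<rightarrow>\<^sub>M borel" "h \<in> N \<rightarrow>\<^sub>M borel" "k \<in> N \<rightarrow>\<^sub>M borel"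
  have [measurable]: "(\<lambda>x. dq (f x) (g x) (h x)) \<in> borel_measurable N"
    by (rule measurable_dq) measurable
  show ?thesis unfolding aq_dq by measurable
qed

lemma inner1:
  "(\<integral>\<^sup>+c. ennreal (erlang_density 1 1 c) * indicator {z<..} (ln c - lw - y) \<partial>lborel)
   = ennreal ((1 + exp (z + lw + y)) * exp (- exp (z + lw + y)))"
proof -
  define s where "s = exp (z + lw + y)"
  have s: "s > 0" unfolding s_def by simp
  have "(\<integral>\<^sup>+c. ennreal (erlang_density 1 1 c) * indicator {z<..} (ln c - lw - y) \<partial>lborel)
      = (\<integral>\<^sup>+c. ennreal (c * exp (- c)) * indicator {s<..} c \<partial>lborel)"
  proof (intro nn_integral_cong)
    fix c :: real
    show "ennreal (erlang_density 1 1 c) * indicator {z<..} (ln c - lw - y) = ennreal (c * exp (- c)) * indicator {s<..} c"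
    proof (cases "c > 0")
      case True
      have "(z < ln c - lw - y) \<longleftrightarrow> (s < c)"
        unfolding s_def using True by (metis add.commute diff_diff_eq exp_less_cancel_iff exp_ln less_diff_eq)
      then show ?thesis using True by (simp add: erlang_density_def indicator_def)
    next
      case False
      then show ?thesis using s by (auto simp: erlang_density_def indicator_def)
    qed
  qed
  also have "\<dots> = (\<integral>\<^sup>+c. ennreal (c * exp (- c)) * indicator {s..} c \<partial>lborel)"
    by (intro nn_integral_cong_AE eventually_mono[OF AE_lborel_singleton[of s]]) (auto simp: indicator_def)
  also have "\<dots> = ennreal ((1 + s) * exp (- s))"
    using s by (intro C3) simp
  finally show ?thesis unfolding s_def .
qed

lemma inner2:
  assumes mu: "\<mu> \<ge> 0"
  shows "(\<integral>\<^sup>+c. ennreal (erlang_density 1 1 c) * ennreal (exp (- \<mu> * exp (ln c - lw - y))) \<partial>lborel)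
   = ennreal (1 / (1 + \<mu> * exp (- lw) * exp (- y))^2)"
proof -
  define a where "a = 1 + \<mu> * exp (- lw) * exp (- y)"
  have a: "a > 0" unfolding a_def using mu by (smt (verit) exp_gt_zero mult_nonneg_nonneg)
  have "(\<integral>\<^sup>+c. ennreal (erlang_density 1 1 c) * ennreal (exp (- \<mu> * exp (ln c - lw - y))) \<partial>lborel)
      = (\<integral>\<^sup>+c. ennreal (c * exp (- a * c)) * indicator {0..} c \<partial>lborel)"
  proof (intro nn_integral_cong)
    fix c :: real
    show "ennreal (erlang_density 1 1 c) * ennreal (exp (- \<mu> * exp (ln c - lw - y))) = ennreal (c * exp (- a * c)) * indicator {0..} c"
    proof (cases "c > 0")
      case True
      have "exp (ln c - lw - y) = c * exp (- lw) * exp (- y)"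
        using True by (simp add: exp_diff exp_minus exp_add field_simps)
      moreover have "exp (- c) * exp (- \<mu> * (c * exp (- lw) * exp (- y))) = exp (- c + - \<mu> * (c * exp (- lw) * exp (- y)))"
        by (rule exp_add[symmetric])
      moreover have "- c + - \<mu> * (c * exp (- lw) * exp (- y)) = - a * c"
        unfolding a_def by (simp add: algebra_simps)
      ultimately have "c * exp (- c) * exp (- \<mu> * exp (ln c - lw - y)) = c * exp (- a * c)"
        by (simp add: mult.assoc)
      then show ?thesis using True by (simp add: erlang_density_def indicator_def ennreal_mult[symmetric])
    next
      case False
      then show ?thesis by (auto simp: erlang_density_def indicator_def)
    qed
  qed
  also have "\<dots> = ennreal (1 / a^2)" by (rule C1[OF a])
  finally show ?thesis unfolding a_def .
qed

lemma pc1: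
  "(\<integral>\<^sup>+r. ennreal (erlang_density 1 1 r) *
      (\<integral>\<^sup>+b. (\<integral>\<^sup>+c. ennreal (erlang_density 1 1 c) * indicator {z<..} (aq lw r c b) \<partial>lborel)
          * indicator {0..1} b \<partial>lborel) \<partial>lborel)
   = ennreal (exp (- exp (z + lw)))"
proof -
  define K where "K = exp (z + lw)"
  have K: "K > 0" unfolding K_def by simp
  define \<Phi> where "\<Phi> x y = ennreal ((1 + exp (z + lw + y)) * exp (- exp (z + lw + y)))" for x y :: real
  have inner: "(\<integral>\<^sup>+c. ennreal (erlang_density 1 1 c) * indicator {z<..} (aq lw r c b) \<partial>lborel)
      = \<Phi> (dq lw r b) (r - dq lw r b)" for r b
    unfolding aq_dq \<Phi>_def by (rule inner1)
  have "(\<integral>\<^sup>+r. ennreal (erlang_density 1 1 r) *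
      (\<integral>\<^sup>+b. (\<integral>\<^sup>+c. ennreal (erlang_density 1 1 c) * indicator {z<..} (aq lw r c b) \<partial>lborel)
          * indicator {0..1} b \<partial>lborel) \<partial>lborel)
      = (\<integral>\<^sup>+r. ennreal (erlang_density 1 1 r) *
      (\<integral>\<^sup>+b. \<Phi> (dq lw r b) (r - dq lw r b) * indicator {0..1} b \<partial>lborel) \<partial>lborel)"
    unfolding inner ..
  also have "\<dots> = (\<integral>\<^sup>+x. ennreal (exp (-x)) * indicator {0..} x * (\<integral>\<^sup>+y. ennreal (exp (-y)) * indicator {0..} y * \<Phi> x y \<partial>lborel) \<partial>lborel)"
    by (rule expect_split) (unfold \<Phi>_def, measurable)
  also have "\<dots> = (\<integral>\<^sup>+x. ennreal (exp (-x)) * indicator {0..} x * ennreal (exp (- K)) \<partial>lborel)"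
  proof (intro nn_integral_cong)
    fix x :: real
    have "(\<integral>\<^sup>+y. ennreal (exp (-y)) * indicator {0..} y * \<Phi> x y \<partial>lborel)
       = (\<integral>\<^sup>+y. ennreal (exp (-y) * (1 + K * exp y) * exp (- K * exp y)) * indicator {0..} y \<partial>lborel)"
      by (intro nn_integral_cong)
         (simp add: \<Phi>_def K_def exp_add ennreal_mult' mult_ac)
    also have "\<dots> = ennreal (exp (- K))" by (rule C4[OF K])
    finally show "ennreal (exp (-x)) * indicator {0..} x * (\<integral>\<^sup>+y. ennreal (exp (-y)) * indicator {0..} y * \<Phi> x y \<partial>lborel)
        = ennreal (exp (-x)) * indicator {0..} x * ennreal (exp (- K))" by simp
  qed
  also have "\<dots> = (\<integral>\<^sup>+x. ennreal (exp (-x)) * indicator {0..} x \<partial>lborel) * ennreal (exp (- K))"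
    by (rule nn_integral_multc) measurable
  also have "\<dots> = ennreal (exp (- K))" using C0[of 0] by simp
  finally show ?thesis unfolding K_def .
qed

lemma pc2:
  assumes L: "L \<ge> 0" and mu: "\<mu> \<ge> 0"
  shows "(\<integral>\<^sup>+r. ennreal (erlang_density 1 1 r) *
      (\<integral>\<^sup>+b. (\<integral>\<^sup>+c. ennreal (erlang_density 1 1 c) *
           (indicator {L..} (dq lw r b) * ennreal (exp (- \<mu> * exp (aq lw r c b)))) \<partial>lborel)
          * indicator {0..1} b \<partial>lborel) \<partial>lborel)
   = ennreal (exp (- L) / (1 + \<mu> * exp (- lw)))"
proof -
  define \<kappa> where "\<kappa> = \<mu> * exp (- lw)"
  have k: "\<kappa> \<ge> 0" unfolding \<kappa>_def using mu by simp
  define \<Phi> where "\<Phi> x y = indicator {L..} x * ennreal (1 / (1 + \<kappa> * exp (- y))^2)" for x y :: real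
  have inner: "(\<integral>\<^sup>+c. ennreal (erlang_density 1 1 c) *
           (indicator {L..} (dq lw r b) * ennreal (exp (- \<mu> * exp (aq lw r c b)))) \<partial>lborel)
      = \<Phi> (dq lw r b) (r - dq lw r b)" for r b
  proof -
    have "(\<integral>\<^sup>+c. ennreal (erlang_density 1 1 c) *
           (indicator {L..} (dq lw r b) * ennreal (exp (- \<mu> * exp (aq lw r c b)))) \<partial>lborel)
        = (\<integral>\<^sup>+c. indicator {L..} (dq lw r b) * (ennreal (erlang_density 1 1 c) *
           ennreal (exp (- \<mu> * exp (ln c - lw - (r - dq lw r b))))) \<partial>lborel)"
      unfolding aq_dq by (simp add: mult_ac)
    also have "\<dots> = indicator {L..} (dq lw r b) * (\<integral>\<^sup>+c. ennreal (erlang_density 1 1 c) *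
           ennreal (exp (- \<mu> * exp (ln c - lw - (r - dq lw r b)))) \<partial>lborel)"
      by (rule nn_integral_cmult) measurable
    also have "\<dots> = \<Phi> (dq lw r b) (r - dq lw r b)"
      unfolding inner2[OF mu] \<Phi>_def \<kappa>_def by simp
    finally show ?thesis .
  qed
  have "(\<integral>\<^sup>+r. ennreal (erlang_density 1 1 r) *
      (\<integral>\<^sup>+b. (\<integral>\<^sup>+c. ennreal (erlang_density 1 1 c) *
           (indicator {L..} (dq lw r b) * ennreal (exp (- \<mu> * exp (aq lw r c b)))) \<partial>lborel)
          * indicator {0..1} b \<partial>lborel) \<partial>lborel)
      = (\<integral>\<^sup>+r. ennreal (erlang_density 1 1 r) *
      (\<integral>\<^sup>+b. \<Phi> (dq lw r b) (r - dq lw r b) * indicator {0..1} b \<partial>lborel) \<partial>lborel)"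
    unfolding inner ..
  also have "\<dots> = (\<integral>\<^sup>+x. ennreal (exp (-x)) * indicator {0..} x * (\<integral>\<^sup>+y. ennreal (exp (-y)) * indicator {0..} y * \<Phi> x y \<partial>lborel) \<partial>lborel)"
    by (rule expect_split) (unfold \<Phi>_def, measurable)
  also have "\<dots> = (\<integral>\<^sup>+x. ennreal (exp (-x)) * indicator {L..} x * ennreal (1 / (1 + \<kappa>)) \<partial>lborel)"
  proof (intro nn_integral_cong)
    fix x :: real
    have "(\<integral>\<^sup>+y. ennreal (exp (-y)) * indicator {0..} y * \<Phi> x y \<partial>lborel)
       = (\<integral>\<^sup>+y. indicator {L..} x * (ennreal (exp (-y) / (1 + \<kappa> * exp (-y))^2) * indicator {0..} y) \<partial>lborel)"
    proof (intro nn_integral_cong)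
      fix y :: real
      have "ennreal (exp (-y) / (1 + \<kappa> * exp (-y))^2) = ennreal (exp (-y)) * ennreal (1 / (1 + \<kappa> * exp (-y))^2)"
        by (simp add: ennreal_mult'[symmetric])
      then show "ennreal (exp (-y)) * indicator {0..} y * \<Phi> x y =
          indicator {L..} x * (ennreal (exp (-y) / (1 + \<kappa> * exp (-y))^2) * indicator {0..} y)"
        by (simp add: \<Phi>_def mult_ac)
    qed
    also have "\<dots> = indicator {L..} x * ennreal (1 / (1 + \<kappa>))"
      by (subst nn_integral_cmult) (auto simp: C2[OF k])
    finally show "ennreal (exp (-x)) * indicator {0..} x * (\<integral>\<^sup>+y. ennreal (exp (-y)) * indicator {0..} y * \<Phi> x y \<partial>lborel)
        = ennreal (exp (-x)) * indicator {L..} x * ennreal (1 / (1 + \<kappa>))"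
      using L by (auto simp: indicator_def)
  qed
  also have "\<dots> = (\<integral>\<^sup>+x. ennreal (exp (-x)) * indicator {L..} x \<partial>lborel) * ennreal (1 / (1 + \<kappa>))"
    by (rule nn_integral_multc) measurable
  also have "\<dots> = ennreal (exp (- L) / (1 + \<kappa>))"
    using k by (simp add: C0 ennreal_mult'[symmetric] divide_inverse)
  finally show ?thesis unfolding \<kappa>_def .
qed

lemma measurable_g3:
  fixes g :: "real \<Rightarrow> real \<Rightarrow> real \<Rightarrow> ennreal"
  assumes gm: "(\<lambda>p. g (fst p) (fst (snd p)) (snd (snd p))) \<in> borel_measurable (borel \<Otimes>\<^sub>M (borel \<Otimes>\<^sub>M borel))"
    and [measurable]: "f1 \<in> N \<rightarrow>\<^sub>M borel" "f2 \<in> N \<rightarrow>\<^sub>M borel" "f3 \<in> N \<rightarrow>\<^sub>M borel"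
  shows "(\<lambda>x. g (f1 x) (f2 x) (f3 x)) \<in> borel_measurable N"
proof -
  have "(\<lambda>x. (f1 x, (f2 x, f3 x))) \<in> N \<rightarrow>\<^sub>M borel \<Otimes>\<^sub>M (borel \<Otimes>\<^sub>M borel)" by measurable
  from measurable_compose[OF this gm] show ?thesis by (simp add: comp_def)
qed

lemma (in prob_space) indep_var_pick:
  fixes X :: "'i \<Rightarrow> 'a \<Rightarrow> real"
  assumes ind: "indep_vars (\<lambda>_. borel) X I" and AB: "A \<inter> B = {}" "A \<subseteq> I" "B \<subseteq> I"
    and f: "f \<in> Pi\<^sub>M A (\<lambda>_. borel) \<rightarrow>\<^sub>M N1" and g: "g \<in> Pi\<^sub>M B (\<lambda>_. borel) \<rightarrow>\<^sub>M N2"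
  shows "indep_var N1 (\<lambda>\<omega>. f (restrict (\<lambda>i. X i \<omega>) A)) N2 (\<lambda>\<omega>. g (restrict (\<lambda>i. X i \<omega>) B))"
  using indep_var_compose[OF indep_var_restrict[OF ind AB] f g] by (simp add: comp_def)

lemma reorder3:
  fixes g :: "real \<Rightarrow> real \<Rightarrow> real \<Rightarrow> ennreal"
  assumes gm: "(\<lambda>p. g (fst p) (fst (snd p)) (snd (snd p))) \<in> borel_measurable (borel \<Otimes>\<^sub>M (borel \<Otimes>\<^sub>M borel))"
  shows "(\<integral>\<^sup>+b. indicator {0..1} b * (\<integral>\<^sup>+c. ennreal (erlang_density 1 1 c) *
         (\<integral>\<^sup>+r. ennreal (erlang_density 1 1 r) * g r c b \<partial>lborel) \<partial>lborel) \<partial>lborel)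
    = (\<integral>\<^sup>+r. ennreal (erlang_density 1 1 r) *
      (\<integral>\<^sup>+b. (\<integral>\<^sup>+c. ennreal (erlang_density 1 1 c) * g r c b \<partial>lborel) * indicator {0..1} b \<partial>lborel) \<partial>lborel)"
proof -
  note g3[measurable (raw)] = measurable_g3[OF gm]
  define F where "F r c b = indicator {0..1} b * (ennreal (erlang_density 1 1 c) * (ennreal (erlang_density 1 1 r) * g r c b))" for r c b
  have Fm[measurable]: "(\<lambda>p. F (fst p) (fst (snd p)) (snd (snd p))) \<in> borel_measurable (borel \<Otimes>\<^sub>M (borel \<Otimes>\<^sub>M borel))"
    unfolding F_def by measurable
  note F3[measurable (raw)] = measurable_g3[OF Fm]
  have "(\<integral>\<^sup>+b. indicator {0..1} b * (\<integral>\<^sup>+c. ennreal (erlang_density 1 1 c) *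
         (\<integral>\<^sup>+r. ennreal (erlang_density 1 1 r) * g r c b \<partial>lborel) \<partial>lborel) \<partial>lborel)
      = (\<integral>\<^sup>+b. \<integral>\<^sup>+c. \<integral>\<^sup>+r. F r c b \<partial>lborel \<partial>lborel \<partial>lborel)"
    unfolding F_def
    by (subst nn_integral_cmult[symmetric], measurable)+
  also have "\<dots> = (\<integral>\<^sup>+b. \<integral>\<^sup>+r. \<integral>\<^sup>+c. F r c b \<partial>lborel \<partial>lborel \<partial>lborel)"
    by (intro nn_integral_cong lborel_pair.Fubini') measurable
  also have "\<dots> = (\<integral>\<^sup>+r. \<integral>\<^sup>+b. \<integral>\<^sup>+c. F r c b \<partial>lborel \<partial>lborel \<partial>lborel)"
    by (intro lborel_pair.Fubini') measurable
  also have "\<dots> = (\<integral>\<^sup>+r. ennreal (erlang_density 1 1 r) *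
      (\<integral>\<^sup>+b. (\<integral>\<^sup>+c. ennreal (erlang_density 1 1 c) * g r c b \<partial>lborel) * indicator {0..1} b \<partial>lborel) \<partial>lborel)"
  proof (intro nn_integral_cong)
    fix r :: real
    have "(\<integral>\<^sup>+b. \<integral>\<^sup>+c. F r c b \<partial>lborel \<partial>lborel)
       = (\<integral>\<^sup>+b. ennreal (erlang_density 1 1 r) * ((\<integral>\<^sup>+c. ennreal (erlang_density 1 1 c) * g r c b \<partial>lborel) * indicator {0..1} b) \<partial>lborel)"
    proof (intro nn_integral_cong)
      fix b :: real
      have "(\<integral>\<^sup>+c. F r c b \<partial>lborel) = (\<integral>\<^sup>+c. (ennreal (erlang_density 1 1 r) * indicator {0..1} b) * (ennreal (erlang_density 1 1 c) * g r c b) \<partial>lborel)"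
        unfolding F_def by (simp add: mult_ac)
      also have "\<dots> = (ennreal (erlang_density 1 1 r) * indicator {0..1} b) * (\<integral>\<^sup>+c. ennreal (erlang_density 1 1 c) * g r c b \<partial>lborel)"
        by (rule nn_integral_cmult) measurable
      finally show "(\<integral>\<^sup>+c. F r c b \<partial>lborel) = ennreal (erlang_density 1 1 r) * ((\<integral>\<^sup>+c. ennreal (erlang_density 1 1 c) * g r c b \<partial>lborel) * indicator {0..1} b)"
        by (simp add: mult_ac)
    qed
    also have "\<dots> = ennreal (erlang_density 1 1 r) * (\<integral>\<^sup>+b. (\<integral>\<^sup>+c. ennreal (erlang_density 1 1 c) * g r c b \<partial>lborel) * indicator {0..1} b \<partial>lborel)"
      by (rule nn_integral_cmult) measurable
    finally show "(\<integral>\<^sup>+b. \<integral>\<^sup>+c. F r c b \<partial>lborel \<partial>lborel) = ennreal (erlang_density 1 1 r) * (\<integral>\<^sup>+b. (\<integral>\<^sup>+c. ennreal (erlang_density 1 1 c) * g r c b \<partial>lborel) * indicator {0..1} b \<partial>lborel)" .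
  qed
  finally show ?thesis .
qed

context
  fixes M :: "'w measure" and X :: "rv_idx \<Rightarrow> 'w \<Rightarrow> real" and D :: nat
  assumes P: "prob_space M"
    and ind: "prob_space.indep_vars M (\<lambda>_. borel) X (rv_indices D)"
    and dR: "\<And>k. k < 2*D \<Longrightarrow> distributed M lborel (X (RI k)) (\<lambda>x. ennreal (erlang_density 1 1 x))"
    and dC: "\<And>k. k < 2*D \<Longrightarrow> distributed M lborel (X (CI k)) (\<lambda>x. ennreal (erlang_density 1 1 x))"
    and dB: "\<And>k. k < 2*D \<Longrightarrow> distributed M lborel (X (BI k)) (\<lambda>x. indicator {0..1} x)"
begin

interpretation prob_space M by (rule P)

lemma law_triple:
  fixes g :: "real \<Rightarrow> real \<Rightarrow> real \<Rightarrow> ennreal"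
  assumes k: "k < 2*D"
    and gm[measurable]: "(\<lambda>p. g (fst p) (fst (snd p)) (snd (snd p))) \<in> borel_measurable (borel \<Otimes>\<^sub>M (borel \<Otimes>\<^sub>M borel))"
  shows "(\<integral>\<^sup>+\<omega>. g (X (RI k) \<omega>) (X (CI k) \<omega>) (X (BI k) \<omega>) \<partial>M)
    = (\<integral>\<^sup>+b. indicator {0..1} b * (\<integral>\<^sup>+c. ennreal (erlang_density 1 1 c) *
         (\<integral>\<^sup>+r. ennreal (erlang_density 1 1 r) * g r c b \<partial>lborel) \<partial>lborel) \<partial>lborel)"
proof -
  define J where "J = {RI k, CI k, BI k}"
  have inI: "J \<subseteq> rv_indices D"
    using k by (auto simp: rv_indices_def J_def)
  define X' where "X' i = (if i \<in> J then X i else (\<lambda>_. 0))" for i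
  have rvX: "random_variable borel (X' i)" for i
    using distributed_measurable[OF dR[OF k]] distributed_measurable[OF dC[OF k]]
      distributed_measurable[OF dB[OF k]]
    by (auto simp: X'_def J_def)
  have indJ: "indep_vars (\<lambda>_. borel) X' J"
    using indep_vars_subset[OF ind inI] by (rule indep_vars_cong[THEN iffD1, rotated -1]) (auto simp: X'_def)
  define Ls where "Ls i = distr M borel (X' i)" for i
  have lawJ: "distr M (Pi\<^sub>M J (\<lambda>_. borel)) (\<lambda>\<omega>. restrict (\<lambda>i. X' i \<omega>) J) = Pi\<^sub>M J Ls"
    using indJ unfolding Ls_def by (subst (asm) indep_vars_iff_distr_eq_PiM) (auto simp: J_def rvX)
  interpret PS: product_sigma_finite Ls
    unfolding product_sigma_finite_def Ls_def
    by (auto intro!: prob_space_imp_sigma_finite prob_space_distr rvX)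
  have sLs[measurable_cong]: "sets (Ls i) = sets borel" for i by (simp add: Ls_def)
  note g3[measurable (raw)] = measurable_g3[OF gm]
  have sM: "measurable (Pi\<^sub>M A Ls) N = measurable (Pi\<^sub>M A (\<lambda>_. borel)) N" for A and N :: "'z measure"
    by (intro measurable_cong_sets sets_PiM_cong) (auto simp: Ls_def)
  have dens: "Ls i = density lborel f" if "distributed M lborel (X i) f" "i \<in> J" for i f
  proof -
    have "Ls i = distr M lborel (X i)"
      unfolding Ls_def X'_def using that by (intro distr_cong) auto
    then show ?thesis using distributed_distr_eq_density[OF that(1)] by simp
  qed
  have fm: "f \<in> borel_measurable borel" if "distributed M lborel (X i) f" for i f
    using distributed_borel_measurable[OF that] by simp
  note fR = fm[OF dR[OF k]] and fC = fm[OF dC[OF k]] and fB = fm[OF dB[OF k]]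
  have J': "J = insert (RI k) (insert (CI k) {BI k})" "RI k \<notin> insert (CI k) {BI k}" "CI k \<notin> {BI k}"
    unfolding J_def by auto
  have "(\<integral>\<^sup>+\<omega>. g (X (RI k) \<omega>) (X (CI k) \<omega>) (X (BI k) \<omega>) \<partial>M)
      = (\<integral>\<^sup>+\<omega>. (\<lambda>y. g (y (RI k)) (y (CI k)) (y (BI k))) (restrict (\<lambda>i. X' i \<omega>) J) \<partial>M)"
    by (auto simp: X'_def J_def intro!: nn_integral_cong)
  also have "\<dots> = (\<integral>\<^sup>+y. g (y (RI k)) (y (CI k)) (y (BI k)) \<partial>(Pi\<^sub>M J Ls))"
    unfolding lawJ[symmetric]
    by (subst nn_integral_distr) (auto simp: J_def intro!: measurable_restrict rvX measurable_g3[OF gm])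
  also have "\<dots> = (\<integral>\<^sup>+x. (\<integral>\<^sup>+r. g r (x (CI k)) (x (BI k)) \<partial>Ls (RI k)) \<partial>(Pi\<^sub>M (insert (CI k) {BI k}) Ls))"
    unfolding J'(1) by (subst PS.product_nn_integral_insert) (auto simp: J_def sM intro!: measurable_g3[OF gm])
  also have "\<dots> = (\<integral>\<^sup>+x. (\<integral>\<^sup>+c. (\<integral>\<^sup>+r. g r c (x (BI k)) \<partial>Ls (RI k)) \<partial>Ls (CI k)) \<partial>(Pi\<^sub>M {BI k} Ls))"
  proof (subst PS.product_nn_integral_insert)
    have "(\<lambda>p. g (snd p) (fst p (CI k)) (fst p (BI k))) \<in> borel_measurable (Pi\<^sub>M {CI k, BI k} (\<lambda>_. borel) \<Otimes>\<^sub>M borel)"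
      by (rule measurable_g3[OF gm]) auto
    moreover have "sets (Pi\<^sub>M {CI k, BI k} (\<lambda>_. borel) \<Otimes>\<^sub>M borel) = sets (Pi\<^sub>M {CI k, BI k} Ls \<Otimes>\<^sub>M Ls (RI k))"
      by (intro sets_pair_measure_cong sets_PiM_cong) (auto simp: Ls_def)
    ultimately have "(\<lambda>(x, r). g r (x (CI k)) (x (BI k))) \<in> borel_measurable (Pi\<^sub>M {CI k, BI k} Ls \<Otimes>\<^sub>M Ls (RI k))"
      by (simp add: case_prod_beta' cong: measurable_cong_sets)
    then show "(\<lambda>x. \<integral>\<^sup>+r. g r (x (CI k)) (x (BI k)) \<partial>Ls (RI k)) \<in> borel_measurable (Pi\<^sub>M (insert (CI k) {BI k}) Ls)"
      using sigma_finite_measure.borel_measurable_nn_integral[OF PS.sigma_finite_measures[of "RI k"],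
          where f="\<lambda>x r. g r (x (CI k)) (x (BI k))"] by simp
  qed auto
  also have "\<dots> = (\<integral>\<^sup>+b. (\<integral>\<^sup>+c. (\<integral>\<^sup>+r. g r c b \<partial>Ls (RI k)) \<partial>Ls (CI k)) \<partial>Ls (BI k))"
    by (subst PS.product_nn_integral_singleton) measurable
  also have "\<dots> = (\<integral>\<^sup>+b. indicator {0..1} b * (\<integral>\<^sup>+c. ennreal (erlang_density 1 1 c) *
         (\<integral>\<^sup>+r. ennreal (erlang_density 1 1 r) * g r c b \<partial>lborel) \<partial>lborel) \<partial>lborel)"
  proof -
    have LR: "Ls (RI k) = density lborel (\<lambda>x. ennreal (erlang_density 1 1 x))"
      using dens[OF dR[OF k]] by (simp add: J_def)
    have LC: "Ls (CI k) = density lborel (\<lambda>x. ennreal (erlang_density 1 1 x))"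
      using dens[OF dC[OF k]] by (simp add: J_def)
    have LB: "Ls (BI k) = density lborel (\<lambda>x. indicator {0..1} x)"
      using dens[OF dB[OF k]] by (simp add: J_def)
    have m1: "(\<lambda>r. g r c b) \<in> borel_measurable borel" for c b by measurable
    have m2: "(\<lambda>c. ennreal (erlang_density 1 1 c) * (\<integral>\<^sup>+r. ennreal (erlang_density 1 1 r) * g r c b \<partial>lborel)) \<in> borel_measurable borel" for b
      by measurable
    show ?thesis unfolding LR LC LB
      by (simp add: nn_integral_density m1 m2 fR fC fB del: One_nat_def)
  qed
  finally show ?thesis .
qed

lemma expect_coord:
  fixes g :: "real \<Rightarrow> real \<Rightarrow> real \<Rightarrow> ennreal"
  assumes k: "k < 2*D"
    and gm: "(\<lambda>p. g (fst p) (fst (snd p)) (snd (snd p))) \<in> borel_measurable (borel \<Otimes>\<^sub>M (borel \<Otimes>\<^sub>M borel))"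
  shows "(\<integral>\<^sup>+\<omega>. g (X (RI k) \<omega>) (X (CI k) \<omega>) (X (BI k) \<omega>) \<partial>M)
    = (\<integral>\<^sup>+r. ennreal (erlang_density 1 1 r) *
      (\<integral>\<^sup>+b. (\<integral>\<^sup>+c. ennreal (erlang_density 1 1 c) * g r c b \<partial>lborel) * indicator {0..1} b \<partial>lborel) \<partial>lborel)"
  using law_triple[OF k gm] reorder3[OF gm] by simp

lemma rv_coord:
  assumes k: "k < 2*D"
  shows "X (RI k) \<in> borel_measurable M" "X (CI k) \<in> borel_measurable M" "X (BI k) \<in> borel_measurable M"
  using distributed_measurable[OF dR[OF k]] distributed_measurable[OF dC[OF k]]
      distributed_measurable[OF dB[OF k]] by auto

lemma surv_coord:
  assumes k: "k < 2*D"
  shows "emeasure M {\<omega> \<in> space M. z < aq lw (X (RI k) \<omega>) (X (CI k) \<omega>) (X (BI k) \<omega>)}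
     = ennreal (exp (- exp (z + lw)))"
proof -
  note [measurable] = rv_coord[OF k]
  define S where "S = {\<omega> \<in> space M. z < aq lw (X (RI k) \<omega>) (X (CI k) \<omega>) (X (BI k) \<omega>)}"
  have Sm: "S \<in> sets M" unfolding S_def by measurable
  have "emeasure M S = (\<integral>\<^sup>+\<omega>. indicator S \<omega> \<partial>M)" using nn_integral_indicator[OF Sm] by simp
  also have "\<dots> = (\<integral>\<^sup>+\<omega>. indicator {z<..} (aq lw (X (RI k) \<omega>) (X (CI k) \<omega>) (X (BI k) \<omega>)) \<partial>M)"
    by (intro nn_integral_cong) (auto simp: indicator_def S_def)
  also have "\<dots> = ennreal (exp (- exp (z + lw)))"
    by (subst expect_coord[OF k, where g="\<lambda>r c b. indicator {z<..} (aq lw r c b)"]) (measurable, rule pc1)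
  finally show ?thesis unfolding S_def .
qed

lemma e2_coord:
  assumes k: "k < 2*D" and L: "L \<ge> 0" and mu: "\<mu> \<ge> 0"
  shows "(\<integral>\<^sup>+\<omega>. indicator {L..} (dq lw (X (RI k) \<omega>) (X (BI k) \<omega>)) *
      ennreal (exp (- \<mu> * exp (aq lw (X (RI k) \<omega>) (X (CI k) \<omega>) (X (BI k) \<omega>)))) \<partial>M)
     = ennreal (exp (- L) / (1 + \<mu> * exp (- lw)))"
  by (subst expect_coord[OF k, where g="\<lambda>r c b. indicator {L..} (dq lw r b) * ennreal (exp (- \<mu> * exp (aq lw r c b)))"])
     (measurable, rule pc2[OF L mu])

end

definition coordA :: "(rv_idx \<Rightarrow> real) \<Rightarrow> (nat \<Rightarrow> real) \<Rightarrow> nat \<Rightarrow> real" where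
  "coordA y lwv j = aq (lwv j) (y (RI j)) (y (CI j)) (y (BI j))"

definition coordD :: "(rv_idx \<Rightarrow> real) \<Rightarrow> (nat \<Rightarrow> real) \<Rightarrow> nat \<Rightarrow> real" where
  "coordD y lwv j = dq (lwv j) (y (RI j)) (y (BI j))"

lemma measurable_coordA:
  assumes "RI j \<in> I" "CI j \<in> I" "BI j \<in> I"
  shows "(\<lambda>y. coordA y lwv j) \<in> Pi\<^sub>M I (\<lambda>_. borel) \<rightarrow>\<^sub>M borel"
  unfolding coordA_def using assms by measurable

lemma measurable_coordD:
  assumes "RI j \<in> I" "BI j \<in> I"
  shows "(\<lambda>y. coordD y lwv j) \<in> Pi\<^sub>M I (\<lambda>_. borel) \<rightarrow>\<^sub>M borel"
  unfolding coordD_def using assms by measurable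

lemma coordA_restrict: "RI j \<in> I \<Longrightarrow> CI j \<in> I \<Longrightarrow> BI j \<in> I \<Longrightarrow> coordA (restrict f I) lwv j = coordA f lwv j"
  by (simp add: coordA_def)

lemma coordD_restrict: "RI j \<in> I \<Longrightarrow> BI j \<in> I \<Longrightarrow> coordD (restrict f I) lwv j = coordD f lwv j"
  by (simp add: coordD_def)

context
  fixes M :: "'w measure" and X :: "rv_idx \<Rightarrow> 'w \<Rightarrow> real" and D :: nat
  assumes P: "prob_space M"
    and ind: "prob_space.indep_vars M (\<lambda>_. borel) X (rv_indices D)"
    and dR: "\<And>k. k < 2*D \<Longrightarrow> distributed M lborel (X (RI k)) (\<lambda>x. ennreal (erlang_density 1 1 x))"
    and dC: "\<And>k. k < 2*D \<Longrightarrow> distributed M lborel (X (CI k)) (\<lambda>x. ennreal (erlang_density 1 1 x))"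
    and dB: "\<And>k. k < 2*D \<Longrightarrow> distributed M lborel (X (BI k)) (\<lambda>x. indicator {0..1} x)"
begin

interpretation prob_space M by (rule P)

lemma prod_surv:
  assumes Os: "Os \<subseteq> {..<2*D}"
  shows "emeasure M {\<omega> \<in> space M. \<forall>j\<in>Os. z < coordA (\<lambda>i. X i \<omega>) lwv j}
    = ennreal (exp (- (exp z * (\<Sum>j\<in>Os. exp (lwv j)))))"
proof (cases "Os = {}")
  case True
  then show ?thesis by (simp add: emeasure_space_1)
next
  case False
  have fin: "finite Os" using Os finite_subset by blast
  define K where "K j = {RI j, CI j, BI j}" for j
  have Ksub: "K j \<subseteq> rv_indices D" if "j \<in> Os" for j
    using Os that by (auto simp: K_def rv_indices_def)
  have disj: "disjoint_family_on K Os" by (auto simp: disjoint_family_on_def K_def)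
  have i1: "indep_vars (\<lambda>j. Pi\<^sub>M (K j) (\<lambda>_. borel)) (\<lambda>j \<omega>. restrict (\<lambda>i. X i \<omega>) (K j)) Os"
    by (rule indep_vars_restrict[OF ind Ksub disj])
  have i2: "indep_vars (\<lambda>_. borel) (\<lambda>j \<omega>. coordA (restrict (\<lambda>i. X i \<omega>) (K j)) lwv j) Os"
    by (rule indep_vars_compose2[OF i1]) (auto simp: K_def intro!: measurable_coordA)
  have eqA: "coordA (restrict (\<lambda>i. X i \<omega>) (K j)) lwv j = coordA (\<lambda>i. X i \<omega>) lwv j" for j \<omega>
    by (simp add: coordA_restrict K_def)
  have i3: "indep_vars (\<lambda>_. borel) (\<lambda>j \<omega>. coordA (\<lambda>i. X i \<omega>) lwv j) Os"
    using i2 unfolding eqA .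
  have "prob (\<Inter>j\<in>Os. (\<lambda>\<omega>. coordA (\<lambda>i. X i \<omega>) lwv j) -` {z<..} \<inter> space M)
      = (\<Prod>j\<in>Os. prob ((\<lambda>\<omega>. coordA (\<lambda>i. X i \<omega>) lwv j) -` {z<..} \<inter> space M))"
    by (rule indep_varsD[OF i3 False fin]) auto
  also have "\<dots> = (\<Prod>j\<in>Os. exp (- exp (z + lwv j)))"
  proof (rule prod.cong[OF refl])
    fix j assume j: "j \<in> Os"
    then have jD: "j < 2*D" using Os by auto
    have "emeasure M ((\<lambda>\<omega>. coordA (\<lambda>i. X i \<omega>) lwv j) -` {z<..} \<inter> space M)
        = emeasure M {\<omega> \<in> space M. z < aq (lwv j) (X (RI j) \<omega>) (X (CI j) \<omega>) (X (BI j) \<omega>)}"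
      by (intro arg_cong[where f="emeasure M"]) (auto simp: coordA_def)
    also have "\<dots> = ennreal (exp (- exp (z + lwv j)))"
      by (rule surv_coord[OF P ind dR dC dB jD])
    finally show "prob ((\<lambda>\<omega>. coordA (\<lambda>i. X i \<omega>) lwv j) -` {z<..} \<inter> space M) = exp (- exp (z + lwv j))"
      by (simp add: emeasure_eq_measure)
  qed
  also have "\<dots> = exp (- (exp z * (\<Sum>j\<in>Os. exp (lwv j))))"
    by (simp add: exp_sum[symmetric] sum_negf sum_distrib_left exp_add fin)
  finally have pr: "prob (\<Inter>j\<in>Os. (\<lambda>\<omega>. coordA (\<lambda>i. X i \<omega>) lwv j) -` {z<..} \<inter> space M) = exp (- (exp z * (\<Sum>j\<in>Os. exp (lwv j))))" .
  have "{\<omega> \<in> space M. \<forall>j\<in>Os. z < coordA (\<lambda>i. X i \<omega>) lwv j} = (\<Inter>j\<in>Os. (\<lambda>\<omega>. coordA (\<lambda>i. X i \<omega>) lwv j) -` {z<..} \<inter> space M)"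
    using False by auto
  then show ?thesis using pr by (simp add: emeasure_eq_measure)
qed

lemma race:
  assumes Ks: "Ks \<subseteq> {..<2*D}" and k0: "k0 \<in> Ks" and L: "L \<ge> 0"
  shows "emeasure M {\<omega> \<in> space M. (\<forall>j\<in>Ks - {k0}. coordA (\<lambda>i. X i \<omega>) lwv k0 < coordA (\<lambda>i. X i \<omega>) lwv j)
            \<and> L \<le> coordD (\<lambda>i. X i \<omega>) lwv k0}
     = ennreal (exp (- L) * exp (lwv k0) / (\<Sum>j\<in>Ks. exp (lwv j)))"
proof -
  define Os where "Os = Ks - {k0}"
  have Os: "Os \<subseteq> {..<2*D}" "finite Os" "k0 \<notin> Os" unfolding Os_def using Ks finite_subset by auto
  have k0D: "k0 < 2*D" using Ks k0 by auto
  define A0 where "A0 = {RI k0, CI k0, BI k0}"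
  define B0 where "B0 = (\<Union>j\<in>Os. {RI j, CI j, BI j})"
  have A0sub: "A0 \<subseteq> rv_indices D" using k0D by (auto simp: A0_def rv_indices_def)
  have B0sub: "B0 \<subseteq> rv_indices D" using Os by (auto simp: B0_def rv_indices_def)
  have AB: "A0 \<inter> B0 = {}" using Os by (auto simp: A0_def B0_def)
  define Y1 where "Y1 \<omega> = restrict (\<lambda>i. X i \<omega>) A0" for \<omega>
  define Y2 where "Y2 \<omega> = restrict (\<lambda>i. X i \<omega>) B0" for \<omega>
  define S1 where "S1 = Pi\<^sub>M A0 (\<lambda>_. borel :: real measure)"
  define S2 where "S2 = Pi\<^sub>M B0 (\<lambda>_. borel :: real measure)"
  have iv: "indep_var S1 Y1 S2 Y2"
    unfolding Y1_def Y2_def S1_def S2_def by (rule indep_var_restrict[OF ind AB A0sub B0sub])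
  have rv1[measurable]: "Y1 \<in> M \<rightarrow>\<^sub>M S1" and rv2[measurable]: "Y2 \<in> M \<rightarrow>\<^sub>M S2"
    using indep_var_rv1[OF iv] indep_var_rv2[OF iv] by auto
  have law: "distr M S1 Y1 \<Otimes>\<^sub>M distr M S2 Y2 = distr M (S1 \<Otimes>\<^sub>M S2) (\<lambda>\<omega>. (Y1 \<omega>, Y2 \<omega>))"
    using iv by (simp add: indep_var_distribution_eq)
  have mA1[measurable]: "(\<lambda>y. coordA y lwv k0) \<in> S1 \<rightarrow>\<^sub>M borel"
    unfolding S1_def by (rule measurable_coordA) (auto simp: A0_def)
  have mD1[measurable]: "(\<lambda>y. coordD y lwv k0) \<in> S1 \<rightarrow>\<^sub>M borel"
    unfolding S1_def by (rule measurable_coordD) (auto simp: A0_def)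
  have mA2: "(\<lambda>y. coordA y lwv j) \<in> S2 \<rightarrow>\<^sub>M borel" if "j \<in> Os" for j
    unfolding S2_def by (rule measurable_coordA) (use that in \<open>auto simp: B0_def\<close>)
  define Q where "Q = {p \<in> space (S1 \<Otimes>\<^sub>M S2). (\<forall>j\<in>Os. coordA (fst p) lwv k0 < coordA (snd p) lwv j)
        \<and> L \<le> coordD (fst p) lwv k0}"
  define Sj where "Sj j = {p \<in> space (S1 \<Otimes>\<^sub>M S2). coordA (fst p) lwv k0 < coordA (snd p) lwv j}" for j
  have Sjm: "Sj j \<in> sets (S1 \<Otimes>\<^sub>M S2)" if j: "j \<in> Os" for j
  proof -
    note [measurable] = mA2[OF j]
    show ?thesis unfolding Sj_def by measurable
  qed
  have INT: "space (S1 \<Otimes>\<^sub>M S2) \<inter> (\<Inter>j\<in>Os. Sj j) \<in> sets (S1 \<Otimes>\<^sub>M S2)"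
  proof (cases "Os = {}")
    case True then show ?thesis by simp
  next
    case False
    then have "space (S1 \<Otimes>\<^sub>M S2) \<inter> (\<Inter>j\<in>Os. Sj j) = (\<Inter>j\<in>Os. Sj j)"
      by (auto simp: Sj_def)
    then show ?thesis using False Os(2) Sjm by (auto intro!: sets.finite_INT)
  qed
  have Qm: "Q \<in> sets (S1 \<Otimes>\<^sub>M S2)"
  proof -
    have "Q = (space (S1 \<Otimes>\<^sub>M S2) \<inter> (\<Inter>j\<in>Os. Sj j)) \<inter> {p \<in> space (S1 \<Otimes>\<^sub>M S2). L \<le> coordD (fst p) lwv k0}"
      unfolding Q_def Sj_def by auto
    also have "\<dots> \<in> sets (S1 \<Otimes>\<^sub>M S2)"
      by (intro sets.Int INT) measurable
    finally show ?thesis .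
  qed
  define \<mu> where "\<mu> = (\<Sum>j\<in>Os. exp (lwv j))"
  have mu: "\<mu> \<ge> 0" unfolding \<mu>_def by (simp add: sum_nonneg)
  define E where "E = {\<omega> \<in> space M. (\<forall>j\<in>Ks - {k0}. coordA (\<lambda>i. X i \<omega>) lwv k0 < coordA (\<lambda>i. X i \<omega>) lwv j)
            \<and> L \<le> coordD (\<lambda>i. X i \<omega>) lwv k0}"
  have c1: "coordA (Y1 \<omega>) lwv k0 = coordA (\<lambda>i. X i \<omega>) lwv k0" "coordD (Y1 \<omega>) lwv k0 = coordD (\<lambda>i. X i \<omega>) lwv k0" for \<omega>
    unfolding Y1_def by (auto simp: A0_def coordA_restrict coordD_restrict)
  have c2: "coordA (Y2 \<omega>) lwv j = coordA (\<lambda>i. X i \<omega>) lwv j" if "j \<in> Os" for \<omega> j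
    unfolding Y2_def using that by (subst coordA_restrict) (auto simp: B0_def)
  have sp: "(Y1 \<omega>, Y2 \<omega>) \<in> space (S1 \<Otimes>\<^sub>M S2)" if "\<omega> \<in> space M" for \<omega>
    using measurable_space[OF rv1 that] measurable_space[OF rv2 that] by (simp add: space_pair_measure)
  have ev: "E = (\<lambda>\<omega>. (Y1 \<omega>, Y2 \<omega>)) -` Q \<inter> space M"
    unfolding E_def Q_def using sp c1 c2 by (auto simp: Os_def)
  interpret Y2P: prob_space "distr M S2 Y2" by (rule prob_space_distr) (rule rv2)
  have "emeasure M E = emeasure (distr M (S1 \<Otimes>\<^sub>M S2) (\<lambda>\<omega>. (Y1 \<omega>, Y2 \<omega>))) Q"
    unfolding ev by (rule emeasure_distr[symmetric]) (measurable, rule Qm)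
  also have "\<dots> = emeasure (distr M S1 Y1 \<Otimes>\<^sub>M distr M S2 Y2) Q" unfolding law ..
  also have "\<dots> = (\<integral>\<^sup>+y1. emeasure (distr M S2 Y2) (Pair y1 -` Q) \<partial>distr M S1 Y1)"
  proof (rule Y2P.emeasure_pair_measure_alt)
    have "sets (distr M S1 Y1 \<Otimes>\<^sub>M distr M S2 Y2) = sets (S1 \<Otimes>\<^sub>M S2)"
      by (intro sets_pair_measure_cong) auto
    then show "Q \<in> sets (distr M S1 Y1 \<Otimes>\<^sub>M distr M S2 Y2)" using Qm by simp
  qed
  also have "\<dots> = (\<integral>\<^sup>+y1. indicator {L..} (coordD y1 lwv k0) * ennreal (exp (- (exp (coordA y1 lwv k0) * \<mu>))) \<partial>distr M S1 Y1)"
  proof (intro nn_integral_cong)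
    fix y1 assume y1: "y1 \<in> space (distr M S1 Y1)"
    then have y1s: "y1 \<in> space S1" by simp
    have Pm: "Pair y1 -` Q \<in> sets S2" using sets_Pair1[OF Qm] .
    have "emeasure (distr M S2 Y2) (Pair y1 -` Q) = emeasure M (Y2 -` (Pair y1 -` Q) \<inter> space M)"
      by (rule emeasure_distr[OF rv2 Pm])
    also have "Y2 -` (Pair y1 -` Q) \<inter> space M
        = (if L \<le> coordD y1 lwv k0 then {\<omega> \<in> space M. \<forall>j\<in>Os. coordA y1 lwv k0 < coordA (\<lambda>i. X i \<omega>) lwv j} else {})"
      using y1s measurable_space[OF rv2] c2 by (auto simp: Q_def space_pair_measure)
    also have "emeasure M \<dots> = indicator {L..} (coordD y1 lwv k0) * ennreal (exp (- (exp (coordA y1 lwv k0) * \<mu>)))"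
      using prod_surv[OF Os(1), of "coordA y1 lwv k0" lwv] by (simp add: \<mu>_def indicator_def)
    finally show "emeasure (distr M S2 Y2) (Pair y1 -` Q) = indicator {L..} (coordD y1 lwv k0) * ennreal (exp (- (exp (coordA y1 lwv k0) * \<mu>)))" .
  qed
  also have "\<dots> = (\<integral>\<^sup>+\<omega>. indicator {L..} (coordD (Y1 \<omega>) lwv k0) * ennreal (exp (- (exp (coordA (Y1 \<omega>) lwv k0) * \<mu>))) \<partial>M)"
    by (rule nn_integral_distr) measurable
  also have "\<dots> = (\<integral>\<^sup>+\<omega>. indicator {L..} (dq (lwv k0) (X (RI k0) \<omega>) (X (BI k0) \<omega>)) *
      ennreal (exp (- \<mu> * exp (aq (lwv k0) (X (RI k0) \<omega>) (X (CI k0) \<omega>) (X (BI k0) \<omega>)))) \<partial>M)"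
    by (intro nn_integral_cong) (simp add: Y1_def A0_def coordA_def coordD_def mult.commute)
  also have "\<dots> = ennreal (exp (- L) / (1 + \<mu> * exp (- lwv k0)))"
    by (rule e2_coord[OF P ind dR dC dB k0D L mu])
  also have "exp (- L) / (1 + \<mu> * exp (- lwv k0)) = exp (- L) * exp (lwv k0) / (\<Sum>j\<in>Ks. exp (lwv j))"
  proof -
    have h1: "(\<Sum>j\<in>Ks. exp (lwv j)) = exp (lwv k0) + \<mu>"
      unfolding \<mu>_def Os_def using Ks k0 finite_subset[OF Ks]
      by (simp add: sum.remove)
    have h2: "1 + \<mu> * exp (- lwv k0) = (exp (lwv k0) + \<mu>) / exp (lwv k0)"
      by (simp add: exp_minus field_simps)
    show ?thesis unfolding h1 h2 by simp
  qed
  finally show ?thesis unfolding E_def .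
qed

end

lemma argmin_unique:
  fixes f :: "'a \<Rightarrow> real"
  assumes "P k0" "\<And>j. P j \<Longrightarrow> j \<noteq> k0 \<Longrightarrow> f k0 < f j"
  shows "arg_min f P = k0"
  by (rule arg_minI[of P k0 f]) (use assms in \<open>force+\<close>)

lemma argmin_in:
  fixes f :: "'a \<Rightarrow> real"
  assumes "finite {x. P x}" "P k"
  shows "P (arg_min f P)"
proof -
  have "{x. P x} \<noteq> {}" using assms by auto
  from ex_is_arg_min_if_finite[OF assms(1) this, of f]
  have "\<exists>x. is_arg_min f P x" by simp
  then show ?thesis unfolding arg_min_def by (metis is_arg_min_def someI_ex)
qed

lemma argmin_cong:
  fixes f g :: "'a \<Rightarrow> real"
  assumes "\<And>k. P k \<Longrightarrow> f k = g k"
  shows "arg_min f P = arg_min g P"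
proof -
  have "is_arg_min f P = is_arg_min g P"
    using assms by (auto simp: is_arg_min_def fun_eq_iff)
  then show ?thesis by (simp add: arg_min_def)
qed

definition GAc :: "real \<Rightarrow> (nat \<Rightarrow> real) \<Rightarrow> (rv_idx \<Rightarrow> real) \<Rightarrow> nat \<Rightarrow> real" where
  "GAc p s y k = coordA y (\<lambda>k. p * ln (s k)) k"

definition GTc :: "real \<Rightarrow> (nat \<Rightarrow> real) \<Rightarrow> (rv_idx \<Rightarrow> real) \<Rightarrow> nat \<Rightarrow> int" where
  "GTc p s y k = tq (p * ln (s k)) (y (RI k)) (y (BI k))"

definition GIc :: "nat \<Rightarrow> real \<Rightarrow> (nat \<Rightarrow> real) \<Rightarrow> (rv_idx \<Rightarrow> real) \<Rightarrow> nat" where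
  "GIc N p s y = arg_min (GAc p s y) (\<lambda>k. k < N \<and> 0 < s k)"

definition Gc :: "nat \<Rightarrow> real \<Rightarrow> (nat \<Rightarrow> real) \<Rightarrow> (rv_idx \<Rightarrow> real) \<Rightarrow> nat \<times> int" where
  "Gc N p s y = (GIc N p s y, GTc p s y (GIc N p s y))"

lemma gcws_Gc: "gcws D p u (\<lambda>k. y (RI k)) (\<lambda>k. y (CI k)) (\<lambda>k. y (BI k)) = Gc (2*D) p (sign_split u) y"
proof -
  have a: "gcws_a p u (\<lambda>k. y (RI k)) (\<lambda>k. y (CI k)) (\<lambda>k. y (BI k)) = GAc p (sign_split u) y"
    by (simp add: fun_eq_iff gcws_a_def gcws_t_def GAc_def coordA_def aq_def tq_def)
  show ?thesis
    by (simp add: gcws_def gcws_i_def a Gc_def GIc_def GTc_def gcws_t_def tq_def Let_def)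
qed

lemma GAc_GTc: "GAc p s y k = ln (y (CI k)) - y (RI k) * (real_of_int (GTc p s y k) + 1 - y (BI k))"
  by (simp add: GAc_def GTc_def coordA_def aq_def)

lemma GT_mono:
  assumes "p > 0" "0 < s k" "s k \<le> w k" "y (RI k) > 0"
  shows "GTc p s y k \<le> GTc p w y k"
proof -
  have "p * ln (s k) \<le> p * ln (w k)" using assms by (simp add: mult_left_mono)
  then have "p * ln (s k) / y (RI k) \<le> p * ln (w k) / y (RI k)"
    using assms by (simp add: divide_right_mono)
  then show ?thesis unfolding GTc_def tq_def by (intro floor_mono) simp
qed

lemma GA_anti:
  assumes "GTc p s y k \<le> GTc p w y k" "y (RI k) > 0"
  shows "GAc p w y k \<le> GAc p s y k"
  using assms unfolding GAc_GTc by (simp add: mult_left_mono)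

lemma GA_eq: "GTc p s y k = GTc p w y k \<Longrightarrow> GAc p w y k = GAc p s y k"
  unfolding GAc_GTc by simp

lemma consist:
  assumes p: "p > 0"
    and sw: "\<And>k. k < N \<Longrightarrow> 0 \<le> s k \<and> s k \<le> w k"
    and r: "\<And>k. k < N \<Longrightarrow> y (RI k) > 0"
    and kk: "kk < N" "0 < s kk" and t: "GTc p s y kk = GTc p w y kk"
    and strict: "\<And>j. j < N \<Longrightarrow> 0 < w j \<Longrightarrow> j \<noteq> kk \<Longrightarrow> GAc p w y kk < GAc p w y j"
  shows "Gc N p s y = (kk, GTc p w y kk)"
proof -
  have "GIc N p s y = kk"
    unfolding GIc_def
  proof (rule argmin_unique)
    show "kk < N \<and> 0 < s kk" using kk by simp
    fix j assume j: "j < N \<and> 0 < s j" "j \<noteq> kk"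
    have wj: "0 < w j" using sw[of j] j by auto
    have "GAc p s y kk = GAc p w y kk" using GA_eq[OF t] by simp
    also have "\<dots> < GAc p w y j" using strict[of j] j wj by auto
    also have "\<dots> \<le> GAc p s y j"
    proof -
      have "GTc p s y j \<le> GTc p w y j" by (rule GT_mono[OF p]) (use sw[of j] j r[of j] in auto)
      then show ?thesis by (rule GA_anti) (use r[of j] j in auto)
    qed
    finally show "GAc p s y kk < GAc p s y j" .
  qed
  then show ?thesis unfolding Gc_def using t by simp
qed

lemma GI_in:
  assumes "\<exists>k<N. 0 < s k"
  shows "GIc N p s y < N \<and> 0 < s (GIc N p s y)"
proof -
  have fin: "finite {k. k < N \<and> 0 < s k}" by (rule finite_subset[of _ "{..<N}"]) auto
  obtain k where "k < N" "0 < s k" using assms by blast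
  then have "k < N \<and> 0 < s k" by simp
  from argmin_in[OF fin, of k "GAc p s y", OF this] show ?thesis unfolding GIc_def .
qed

lemma char:
  assumes p: "p > 0"
    and S: "\<And>k. 0 \<le> S k" and T: "\<And>k. 0 \<le> T k"
    and suppS: "\<exists>k<N. 0 < S k" and suppT: "\<exists>k<N. 0 < T k"
    and r: "\<And>k. k < N \<Longrightarrow> y (RI k) > 0"
    and k0: "k0 < N" "0 < max (S k0) (T k0)"
    and strict: "\<And>j. j < N \<Longrightarrow> 0 < max (S j) (T j) \<Longrightarrow> j \<noteq> k0 \<Longrightarrow>
        GAc p (\<lambda>k. max (S k) (T k)) y k0 < GAc p (\<lambda>k. max (S k) (T k)) y j"
  shows "Gc N p S y = Gc N p T y \<longleftrightarrow>
     (0 < S k0 \<and> 0 < T k0 \<and> GTc p S y k0 = GTc p (\<lambda>k. max (S k) (T k)) y k0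
        \<and> GTc p T y k0 = GTc p (\<lambda>k. max (S k) (T k)) y k0)" (is "?L \<longleftrightarrow> ?R")
proof
  let ?W = "\<lambda>k. max (S k) (T k)"
  have sS: "\<And>k. k < N \<Longrightarrow> 0 \<le> S k \<and> S k \<le> ?W k" using S by auto
  have sT: "\<And>k. k < N \<Longrightarrow> 0 \<le> T k \<and> T k \<le> ?W k" using T by auto
  assume R: ?R
  have a: "Gc N p S y = (k0, GTc p ?W y k0)" by (rule consist[where s=S and w="\<lambda>k. max (S k) (T k)" and N=N and y=y and kk=k0 and p=p, OF p sS r k0(1)]) (use R strict in auto)
  have b: "Gc N p T y = (k0, GTc p ?W y k0)" by (rule consist[where s=T and w="\<lambda>k. max (S k) (T k)" and N=N and y=y and kk=k0 and p=p, OF p sT r k0(1)]) (use R strict in auto)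
  show ?L using a b by simp
next
  let ?W = "\<lambda>k. max (S k) (T k)"
  have sS: "\<And>k. k < N \<Longrightarrow> 0 \<le> S k \<and> S k \<le> ?W k" using S by auto
  have sT: "\<And>k. k < N \<Longrightarrow> 0 \<le> T k \<and> T k \<le> ?W k" using T by auto
  assume L: ?L
  show ?R
  proof (cases "S k0 \<le> T k0")
    case True
    then have W: "?W k0 = T k0" by simp
    have T0: "0 < T k0" using k0 W by simp
    have tT: "GTc p T y k0 = GTc p ?W y k0" unfolding GTc_def using W by simp
    have "Gc N p T y = (k0, GTc p ?W y k0)" by (rule consist[where s=T and w="\<lambda>k. max (S k) (T k)" and N=N and y=y and kk=k0 and p=p, OF p sT r k0(1) T0 tT strict])
    then have "Gc N p S y = (k0, GTc p ?W y k0)" using L by simp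
    then have g: "GIc N p S y = k0" "GTc p S y k0 = GTc p ?W y k0" unfolding Gc_def by auto
    have "0 < S k0" using GI_in[OF suppS, of p y] g by simp
    then show ?thesis using T0 tT g by simp
  next
    case False
    then have W: "?W k0 = S k0" by simp
    have S0: "0 < S k0" using k0 W by simp
    have tS: "GTc p S y k0 = GTc p ?W y k0" unfolding GTc_def using W by simp
    have "Gc N p S y = (k0, GTc p ?W y k0)" by (rule consist[where s=S and w="\<lambda>k. max (S k) (T k)" and N=N and y=y and kk=k0 and p=p, OF p sS r k0(1) S0 tS strict])
    then have "Gc N p T y = (k0, GTc p ?W y k0)" using L by simp
    then have g: "GIc N p T y = k0" "GTc p T y k0 = GTc p ?W y k0" unfolding Gc_def by auto
    have "0 < T k0" using GI_in[OF suppT, of p y] g by simp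
    then show ?thesis using S0 tS g by simp
  qed
qed

lemma tq_eq_iff:
  assumes "lm \<le> lw" "r > 0"
  shows "tq lm r b = tq lw r b \<longleftrightarrow> lw - lm \<le> dq lw r b"
proof -
  have mono: "tq lm r b \<le> tq lw r b"
    unfolding tq_def using assms by (intro floor_mono) (simp add: divide_right_mono)
  have "lw - lm \<le> dq lw r b \<longleftrightarrow> r * (real_of_int (tq lw r b) - b) \<le> lm"
    unfolding dq_def by linarith
  also have "\<dots> \<longleftrightarrow> real_of_int (tq lw r b) \<le> lm / r + b"
    using assms(2) by (simp add: field_simps)
  also have "\<dots> \<longleftrightarrow> tq lw r b \<le> tq lm r b"
    unfolding tq_def[of lm] by (simp add: le_floor_iff)
  finally show ?thesis using mono by linarith
qed

lemma char2:
  assumes p: "p > 0" and S0: "0 < S k0" and T0: "0 < T k0" and r: "y (RI k0) > 0"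
  shows "(GTc p S y k0 = GTc p (\<lambda>k. max (S k) (T k)) y k0 \<and> GTc p T y k0 = GTc p (\<lambda>k. max (S k) (T k)) y k0)
     \<longleftrightarrow> p * ln (max (S k0) (T k0)) - p * ln (min (S k0) (T k0))
          \<le> dq (p * ln (max (S k0) (T k0))) (y (RI k0)) (y (BI k0))"
proof -
  let ?w = "max (S k0) (T k0)" and ?m = "min (S k0) (T k0)"
  have le: "p * ln ?m \<le> p * ln ?w" using p S0 T0 by (simp add: mult_left_mono)
  have key: "tq (p * ln ?m) (y (RI k0)) (y (BI k0)) = tq (p * ln ?w) (y (RI k0)) (y (BI k0))
      \<longleftrightarrow> p * ln ?w - p * ln ?m \<le> dq (p * ln ?w) (y (RI k0)) (y (BI k0))"
    by (rule tq_eq_iff[OF le r])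
  show ?thesis
  proof (cases "S k0 \<le> T k0")
    case True
    then show ?thesis using key unfolding GTc_def by (simp add: min_def max_def)
  next
    case False
    then show ?thesis using key unfolding GTc_def by (simp add: min_def max_def)
  qed
qed

lemma measurable_argmin_finite:
  fixes f :: "nat \<Rightarrow> 'a \<Rightarrow> real"
  assumes fin: "finite {k. Q k}" and fm[measurable]: "\<And>k. f k \<in> borel_measurable Nm"
  shows "(\<lambda>x. arg_min (\<lambda>k. f k x) Q) \<in> Nm \<rightarrow>\<^sub>M count_space UNIV"
proof -
  define P where "P = {k. Q k}"
  have finP[simp]: "finite P" using fin by (simp add: P_def)
  define MS where "MS x = {k\<in>P. \<forall>j\<in>P. f k x \<le> f j x}" for x
  have am: "arg_min (\<lambda>k. f k x) Q = (SOME k. k \<in> MS x)" for x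
    unfolding arg_min_def is_arg_min_linorder MS_def P_def by simp
  have pre: "(\<lambda>x. arg_min (\<lambda>k. f k x) Q) -` {a} \<inter> space Nm =
     (\<Union>B\<in>{B\<in>Pow P. (SOME k. k\<in>B) = a}. {x\<in>space Nm. \<forall>k\<in>P. ((\<forall>j\<in>P. f k x \<le> f j x) \<longleftrightarrow> k \<in> B)})" for a
  proof -
    have eqB: "(MS x = B) \<longleftrightarrow> (\<forall>k\<in>P. ((\<forall>j\<in>P. f k x \<le> f j x) \<longleftrightarrow> k \<in> B))" if "B \<subseteq> P" for x B
      using that unfolding MS_def by blast
    have sub: "MS x \<subseteq> P" for x unfolding MS_def by auto
    show ?thesis
    proof (rule set_eqI, rule iffI)
      fix x assume "x \<in> (\<lambda>x. arg_min (\<lambda>k. f k x) Q) -` {a} \<inter> space Nm"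
      then have x: "x \<in> space Nm" "(SOME k. k \<in> MS x) = a" by (auto simp: am)
      have "MS x \<in> {B\<in>Pow P. (SOME k. k\<in>B) = a}" using x sub[of x] by simp
      moreover have "x \<in> {x\<in>space Nm. \<forall>k\<in>P. ((\<forall>j\<in>P. f k x \<le> f j x) \<longleftrightarrow> k \<in> MS x)}"
        using x eqB[of "MS x" x, OF sub[of x]] by simp
      ultimately show "x \<in> (\<Union>B\<in>{B\<in>Pow P. (SOME k. k\<in>B) = a}. {x\<in>space Nm. \<forall>k\<in>P. ((\<forall>j\<in>P. f k x \<le> f j x) \<longleftrightarrow> k \<in> B)})"
        by blast
    next
      fix x assume "x \<in> (\<Union>B\<in>{B\<in>Pow P. (SOME k. k\<in>B) = a}. {x\<in>space Nm. \<forall>k\<in>P. ((\<forall>j\<in>P. f k x \<le> f j x) \<longleftrightarrow> k \<in> B)})"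
      then obtain B where B: "B \<subseteq> P" "(SOME k. k\<in>B) = a" "x \<in> space Nm"
          "\<forall>k\<in>P. ((\<forall>j\<in>P. f k x \<le> f j x) \<longleftrightarrow> k \<in> B)" by auto
      then have "MS x = B" using eqB[of B x, OF B(1)] by simp
      then show "x \<in> (\<lambda>x. arg_min (\<lambda>k. f k x) Q) -` {a} \<inter> space Nm" using B by (simp add: am)
    qed
  qed
  show ?thesis
  proof (subst measurable_count_space_eq2_countable, intro conjI ballI)
    show "(\<lambda>x. arg_min (\<lambda>k. f k x) Q) \<in> space Nm \<rightarrow> UNIV" by simp
  next
    fix a :: nat
    show "(\<lambda>x. arg_min (\<lambda>k. f k x) Q) -` {a} \<inter> space Nm \<in> sets Nm"
      unfolding pre
    proof (intro sets.finite_UN)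
      show "finite {B \<in> Pow P. (SOME k. k \<in> B) = a}" by simp
    next
      fix B assume "B \<in> {B \<in> Pow P. (SOME k. k \<in> B) = a}"
      show "{x \<in> space Nm. \<forall>k\<in>P. ((\<forall>j\<in>P. f k x \<le> f j x) \<longleftrightarrow> k \<in> B)} \<in> sets Nm"
        by measurable
    qed
  qed
qed

lemma measurable_Gc:
  fixes Y :: "'a \<Rightarrow> rv_idx \<Rightarrow> real"
  assumes supp: "\<exists>k<N. 0 < s k"
    and mR: "\<And>k. k < N \<Longrightarrow> (\<lambda>x. Y x (RI k)) \<in> borel_measurable Nm"
    and mC: "\<And>k. k < N \<Longrightarrow> (\<lambda>x. Y x (CI k)) \<in> borel_measurable Nm"
    and mB: "\<And>k. k < N \<Longrightarrow> (\<lambda>x. Y x (BI k)) \<in> borel_measurable Nm"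
  shows "(\<lambda>x. Gc N p s (Y x)) \<in> Nm \<rightarrow>\<^sub>M count_space UNIV"
proof -
  define f where "f k x = (if k < N then GAc p s (Y x) k else 0)" for k x
  have fm: "f k \<in> borel_measurable Nm" for k
  proof (cases "k < N")
    case True
    note [measurable] = mR[OF True] mC[OF True] mB[OF True]
    show ?thesis using True unfolding f_def GAc_def coordA_def by simp measurable
  next
    case False then show ?thesis unfolding f_def by simp
  qed
  have GIeq: "GIc N p s (Y x) = arg_min (\<lambda>k. f k x) (\<lambda>k. k < N \<and> 0 < s k)" for x
    unfolding GIc_def f_def by (rule argmin_cong) simp
  have fin: "finite {k. k < N \<and> 0 < s k}" by (rule finite_subset[of _ "{..<N}"]) auto
  have GIm: "(\<lambda>x. GIc N p s (Y x)) \<in> Nm \<rightarrow>\<^sub>M count_space UNIV"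
    unfolding GIeq by (rule measurable_argmin_finite[OF fin fm])
  have GIlt: "GIc N p s (Y x) < N" for x using GI_in[OF supp] by blast
  show ?thesis
  proof (subst measurable_count_space_eq2_countable, intro conjI ballI)
    show "(\<lambda>x. Gc N p s (Y x)) \<in> space Nm \<rightarrow> UNIV" by simp
  next
    fix q :: "nat \<times> int"
    obtain a t where at: "q = (a, t)" by fastforce
    have "(\<lambda>x. Gc N p s (Y x)) -` {q} \<inter> space Nm =
        ((\<lambda>x. GIc N p s (Y x)) -` {a} \<inter> space Nm) \<inter> {x \<in> space Nm. GTc p s (Y x) a = t}"
      unfolding at Gc_def by auto
    also have "\<dots> \<in> sets Nm"
    proof (cases "a < N")
      case True
      note [measurable] = mR[OF True] mB[OF True]
      have "{x \<in> space Nm. GTc p s (Y x) a = t} \<in> sets Nm"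
      proof -
        have "(\<lambda>x. GTc p s (Y x) a) \<in> Nm \<rightarrow>\<^sub>M count_space UNIV"
          unfolding GTc_def by measurable
        then show ?thesis by measurable
      qed
      moreover have "(\<lambda>x. GIc N p s (Y x)) -` {a} \<inter> space Nm \<in> sets Nm"
        using measurable_sets[OF GIm, of "{a}"] by simp
      ultimately show ?thesis by (rule sets.Int[rotated])
    next
      case False
      then have "(\<lambda>x. GIc N p s (Y x)) -` {a} \<inter> space Nm = {}" using GIlt by auto
      then show ?thesis by simp
    qed
    finally show "(\<lambda>x. Gc N p s (Y x)) -` {q} \<inter> space Nm \<in> sets Nm" .
  qed
qed

lemma sign_split_nonneg: "0 \<le> sign_split u k"
  by (simp add: sign_split_def)

lemma sign_split_supp:
  assumes "\<exists>i<D. u i \<noteq> 0"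
  shows "\<exists>k<2*D. 0 < sign_split u k"
proof -
  obtain i where i: "i < D" "u i \<noteq> 0" using assms by blast
  show ?thesis
  proof (cases "u i > 0")
    case True
    then have "0 < sign_split u (2*i)" by (simp add: sign_split_def)
    then show ?thesis using i by (intro exI[of _ "2*i"]) auto
  next
    case False
    then have "0 < sign_split u (2*i+1)" using i by (simp add: sign_split_def)
    then show ?thesis using i by (intro exI[of _ "2*i+1"]) auto
  qed
qed

context
  fixes M :: "'w measure" and X :: "rv_idx \<Rightarrow> 'w \<Rightarrow> real" and D :: nat
  assumes P: "prob_space M"
    and ind: "prob_space.indep_vars M (\<lambda>_. borel) X (rv_indices D)"
    and dR: "\<And>k. k < 2*D \<Longrightarrow> distributed M lborel (X (RI k)) (\<lambda>x. ennreal (erlang_density 1 1 x))"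
    and dC: "\<And>k. k < 2*D \<Longrightarrow> distributed M lborel (X (CI k)) (\<lambda>x. ennreal (erlang_density 1 1 x))"
    and dB: "\<And>k. k < 2*D \<Longrightarrow> distributed M lborel (X (BI k)) (\<lambda>x. indicator {0..1} x)"
begin

interpretation prob_space M by (rule P)

lemma R_pos_AE: "AE \<omega> in M. \<forall>k<2*D. 0 < X (RI k) \<omega>"
proof -
  have "AE \<omega> in M. 0 < X (RI k) \<omega>" if k: "k < 2*D" for k
  proof -
    have m[measurable]: "X (RI k) \<in> borel_measurable M" using rv_coord[OF P ind dR dC dB k] by simp
    have "emeasure M {\<omega>\<in>space M. X (RI k) \<omega> \<le> 0} = emeasure (distr M lborel (X (RI k))) {..0}"
      by (subst emeasure_distr) (auto intro!: arg_cong[where f="emeasure M"])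
    also have "\<dots> = emeasure (density lborel (\<lambda>x. ennreal (erlang_density 1 1 x))) {..0}"
      using distributed_distr_eq_density[OF dR[OF k]] by simp
    also have "\<dots> = (\<integral>\<^sup>+x. ennreal (erlang_density 1 1 x) * indicator {..0} x \<partial>lborel)"
      by (rule emeasure_density) auto
    also have "\<dots> = (\<integral>\<^sup>+(x::real). 0 \<partial>lborel)"
      by (intro nn_integral_cong) (auto simp: indicator_def erlang_density_def)
    finally have "{\<omega>\<in>space M. X (RI k) \<omega> \<le> 0} \<in> null_sets M" by (auto intro: null_setsI)
    then show ?thesis by (rule AE_I') auto
  qed
  then have "AE \<omega> in M. \<forall>k\<in>{..<2*D}. 0 < X (RI k) \<omega>" by (intro AE_finite_allI) auto
  then show ?thesis by (rule eventually_mono) auto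
qed

lemma prob_eq:
  fixes u v :: "nat \<Rightarrow> real" and p :: real
  assumes p: "p > 0" and su: "\<exists>k<2*D. 0 < sign_split u k" and sv: "\<exists>k<2*D. 0 < sign_split v k"
  shows "measure M {\<omega>\<in>space M. Gc (2*D) p (sign_split u) (\<lambda>i. X i \<omega>) = Gc (2*D) p (sign_split v) (\<lambda>i. X i \<omega>)}
     = pGMM D u v p"
proof -
  define N where "N = 2*D"
  define S where "S = sign_split u"
  define T where "T = sign_split v"
  define W where "W k = max (S k) (T k)" for k
  define mn where "mn k = min (S k) (T k)" for k
  define lwW where "lwW k = p * ln (W k)" for k
  define Kw where "Kw = {k. k < N \<and> 0 < W k}"
  define Kb where "Kb = {k. k < N \<and> 0 < S k \<and> 0 < T k}"
  define Lk where "Lk k = lwW k - p * ln (mn k)" for k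
  define Z where "Z = (\<Sum>j\<in>Kw. exp (lwW j))"
  define E where "E L k0 = {\<omega>\<in>space M. (\<forall>j\<in>Kw - {k0}. coordA (\<lambda>i. X i \<omega>) lwW k0 < coordA (\<lambda>i. X i \<omega>) lwW j)
      \<and> L \<le> coordD (\<lambda>i. X i \<omega>) lwW k0}" for L k0
  have ST0: "0 \<le> S k" "0 \<le> T k" for k unfolding S_def T_def by (simp_all add: sign_split_nonneg)
  have KwN: "Kw \<subseteq> {..<N}" unfolding Kw_def by auto
  have finKw: "finite Kw" using KwN finite_subset by blast
  have KbKw: "Kb \<subseteq> Kw" unfolding Kb_def Kw_def W_def by auto
  have finKb: "finite Kb" using KbKw finKw finite_subset by blast
  have Kwne: "Kw \<noteq> {}" using su unfolding Kw_def W_def S_def N_def by fastforce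
  have Zpos: "Z > 0" unfolding Z_def using Kwne finKw by (intro sum_pos) auto
  have rE: "emeasure M (E L k0) = ennreal (exp (- L) * exp (lwW k0) / Z)" if "k0 \<in> Kw" "L \<ge> 0" for L k0
    unfolding E_def Z_def using race[OF P ind dR dC dB, of Kw k0 L lwW] KwN that by (simp add: N_def)
  have Em: "E L k0 \<in> sets M" if k0: "k0 \<in> Kw" for L k0
  proof -
    define cA where "cA j \<omega> = (if j < N then coordA (\<lambda>i. X i \<omega>) lwW j else 0)" for j \<omega>
    have cAm[measurable]: "cA j \<in> borel_measurable M" for j
    proof (cases "j < N")
      case True
      note [measurable] = rv_coord[OF P ind dR dC dB True[unfolded N_def]]
      show ?thesis using True unfolding cA_def coordA_def by simp measurable
    next
      case False then show ?thesis unfolding cA_def by simp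
    qed
    have k0N: "k0 < N" using k0 KwN by auto
    note [measurable] = rv_coord[OF P ind dR dC dB k0N[unfolded N_def]]
    have "E L k0 = {\<omega>\<in>space M. (\<forall>j\<in>Kw - {k0}. cA k0 \<omega> < cA j \<omega>) \<and> L \<le> dq (lwW k0) (X (RI k0) \<omega>) (X (BI k0) \<omega>)}"
      unfolding E_def cA_def coordD_def using KwN k0N by auto
    also have "\<dots> \<in> sets M" using finKw by measurable
    finally show ?thesis .
  qed
  have disj: "E L k0 \<inter> E L' k1 = {}" if "k0 \<in> Kw" "k1 \<in> Kw" "k0 \<noteq> k1" for L L' k0 k1
  proof -
    { fix \<omega> assume a: "\<omega> \<in> E L k0" "\<omega> \<in> E L' k1"
      then have "coordA (\<lambda>i. X i \<omega>) lwW k0 < coordA (\<lambda>i. X i \<omega>) lwW k1"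
        "coordA (\<lambda>i. X i \<omega>) lwW k1 < coordA (\<lambda>i. X i \<omega>) lwW k0"
        using that unfolding E_def by auto
      then have False by simp }
    then show ?thesis by blast
  qed
  have mE: "measure M (E L k0) = exp (- L) * exp (lwW k0) / Z" if "k0 \<in> Kw" "L \<ge> 0" for L k0
    using rE[OF that] Zpos by (simp add: emeasure_eq_measure)
  have "prob (\<Union>k0\<in>Kw. E 0 k0) = (\<Sum>k0\<in>Kw. prob (E 0 k0))"
    using finKw Em disj by (intro finite_measure_finite_Union) (auto simp: disjoint_family_on_def)
  also have "\<dots> = (\<Sum>k0\<in>Kw. exp (lwW k0) / Z)" by (intro sum.cong) (auto simp: mE)
  also have "\<dots> = 1" using Zpos unfolding Z_def by (simp add: sum_divide_distrib[symmetric])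
  finally have AE0: "AE \<omega> in M. \<omega> \<in> (\<Union>k0\<in>Kw. E 0 k0)" by (rule AE_prob_1)
  define Eq where "Eq = {\<omega>\<in>space M. Gc N p S (\<lambda>i. X i \<omega>) = Gc N p T (\<lambda>i. X i \<omega>)}"
  define U where "U = (\<Union>k0\<in>Kb. E (Lk k0) k0)"
  have AEeq: "AE \<omega> in M. \<omega> \<in> Eq \<longleftrightarrow> \<omega> \<in> U"
    using AE0 R_pos_AE
  proof eventually_elim
    case (elim \<omega>)
    then obtain k0 where k0: "k0 \<in> Kw" "\<omega> \<in> E 0 k0" by blast
    have sp: "\<omega> \<in> space M" using k0 unfolding E_def by auto
    define y where "y = (\<lambda>i. X i \<omega>)"
    have r: "\<And>k. k < N \<Longrightarrow> y (RI k) > 0" using elim unfolding y_def N_def by auto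
    have lwWeq: "(\<lambda>k. p * ln (max (S k) (T k))) = lwW" by (simp add: lwW_def W_def fun_eq_iff)
    have strict: "\<And>j. j < N \<Longrightarrow> 0 < max (S j) (T j) \<Longrightarrow> j \<noteq> k0 \<Longrightarrow>
        GAc p (\<lambda>k. max (S k) (T k)) y k0 < GAc p (\<lambda>k. max (S k) (T k)) y j"
      using k0 unfolding GAc_def lwWeq E_def Kw_def W_def y_def by auto
    have k0N: "k0 < N" "0 < max (S k0) (T k0)" using k0 unfolding Kw_def W_def by auto
    have suS: "\<exists>k<N. 0 < S k" using su unfolding S_def N_def .
    have suT: "\<exists>k<N. 0 < T k" using sv unfolding T_def N_def .
    have c1: "Gc N p S y = Gc N p T y \<longleftrightarrow>
     (0 < S k0 \<and> 0 < T k0 \<and> GTc p S y k0 = GTc p (\<lambda>k. max (S k) (T k)) y k0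
        \<and> GTc p T y k0 = GTc p (\<lambda>k. max (S k) (T k)) y k0)"
      by (rule char[OF p ST0(1) ST0(2) suS suT r k0N strict])
    have c2: "Gc N p S y = Gc N p T y \<longleftrightarrow> (k0 \<in> Kb \<and> Lk k0 \<le> coordD y lwW k0)"
    proof (cases "0 < S k0 \<and> 0 < T k0")
      case True
      have "(GTc p S y k0 = GTc p (\<lambda>k. max (S k) (T k)) y k0 \<and> GTc p T y k0 = GTc p (\<lambda>k. max (S k) (T k)) y k0)
         \<longleftrightarrow> Lk k0 \<le> coordD y lwW k0"
        using char2[of p S k0 T y] p r[OF k0N(1)] True
        unfolding Lk_def coordD_def lwW_def W_def mn_def by simp
      then show ?thesis using c1 True k0N unfolding Kb_def by auto
    next
      case False
      then show ?thesis using c1 unfolding Kb_def by auto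
    qed
    have c3: "\<omega> \<in> U \<longleftrightarrow> (k0 \<in> Kb \<and> Lk k0 \<le> coordD y lwW k0)"
    proof
      assume "\<omega> \<in> U"
      then obtain k1 where k1: "k1 \<in> Kb" "\<omega> \<in> E (Lk k1) k1" unfolding U_def by blast
      have "k1 = k0"
      proof (rule ccontr)
        assume "k1 \<noteq> k0"
        then have "E (Lk k1) k1 \<inter> E 0 k0 = {}" using disj[of k1 k0] k1 KbKw k0 by auto
        then show False using k1 k0 by auto
      qed
      then show "k0 \<in> Kb \<and> Lk k0 \<le> coordD y lwW k0" using k1 unfolding E_def y_def by auto
    next
      assume a: "k0 \<in> Kb \<and> Lk k0 \<le> coordD y lwW k0"
      then have "\<omega> \<in> E (Lk k0) k0" using k0 unfolding E_def y_def by auto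
      then show "\<omega> \<in> U" using a unfolding U_def by auto
    qed
    show ?case using c2 c3 sp unfolding Eq_def y_def by auto
  qed
  have Eqm: "Eq \<in> sets M"
  proof -
    have "(\<lambda>\<omega>. Gc N p S (\<lambda>i. X i \<omega>)) \<in> M \<rightarrow>\<^sub>M count_space UNIV"
      using rv_coord[OF P ind dR dC dB] su unfolding S_def N_def by (intro measurable_Gc) auto
    moreover have "(\<lambda>\<omega>. Gc N p T (\<lambda>i. X i \<omega>)) \<in> M \<rightarrow>\<^sub>M count_space UNIV"
      using rv_coord[OF P ind dR dC dB] sv unfolding T_def N_def by (intro measurable_Gc) auto
    ultimately show ?thesis unfolding Eq_def by measurable
  qed
  have Um: "U \<in> sets M" unfolding U_def using finKb Em KbKw by auto
  have "measure M Eq = measure M U"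
    using emeasure_eq_AE[OF AEeq Eqm Um] by (simp add: emeasure_eq_measure)
  also have "\<dots> = (\<Sum>k0\<in>Kb. measure M (E (Lk k0) k0))"
  proof -
    have dKb: "disjoint_family_on (\<lambda>k0. E (Lk k0) k0) Kb"
    proof (unfold disjoint_family_on_def, intro ballI impI)
      fix m n assume "m \<in> Kb" "n \<in> Kb" "m \<noteq> n"
      then show "E (Lk m) m \<inter> E (Lk n) n = {}" using disj[of m n] KbKw by auto
    qed
    show ?thesis
      unfolding U_def using finKb Em KbKw dKb by (intro finite_measure_finite_Union) auto
  qed
  also have "\<dots> = (\<Sum>k0\<in>Kb. mn k0 powr p / Z)"
  proof (intro sum.cong refl)
    fix k0 assume k0: "k0 \<in> Kb"
    then have pos: "0 < S k0" "0 < T k0" "k0 \<in> Kw" using KbKw unfolding Kb_def by auto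
    have mnpos: "mn k0 > 0" "mn k0 \<le> W k0" using pos unfolding mn_def W_def by auto
    have L0: "Lk k0 \<ge> 0" unfolding Lk_def lwW_def using mnpos p by (simp add: mult_left_mono)
    have "exp (- Lk k0) * exp (lwW k0) = exp (p * ln (mn k0))"
      unfolding Lk_def by (simp add: exp_add[symmetric])
    also have "\<dots> = mn k0 powr p" using mnpos by (simp add: powr_def mult.commute)
    finally show "measure M (E (Lk k0) k0) = mn k0 powr p / Z" using mE[OF pos(3) L0] by simp
  qed
  also have "\<dots> = (\<Sum>k<N. mn k powr p) / (\<Sum>k<N. W k powr p)"
  proof -
    have n: "(\<Sum>k\<in>Kb. mn k powr p) = (\<Sum>k<N. mn k powr p)"
    proof (rule sum.mono_neutral_left)
      show "\<forall>i\<in>{..<N} - Kb. mn i powr p = 0"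
      proof
        fix i assume "i \<in> {..<N} - Kb"
        then have "S i = 0 \<or> T i = 0" using ST0[of i] unfolding Kb_def by auto
        then have "mn i = 0" using ST0[of i] unfolding mn_def by auto
        then show "mn i powr p = 0" by simp
      qed
    qed (use finKb in \<open>auto simp: Kb_def\<close>)
    have d: "Z = (\<Sum>k<N. W k powr p)"
    proof -
      have "Z = (\<Sum>k\<in>Kw. W k powr p)"
        unfolding Z_def lwW_def Kw_def by (intro sum.cong) (auto simp: powr_def mult.commute)
      also have "\<dots> = (\<Sum>k<N. W k powr p)"
      proof (rule sum.mono_neutral_left)
        show "\<forall>i\<in>{..<N} - Kw. W i powr p = 0"
        proof
          fix i assume "i \<in> {..<N} - Kw"
          then have "W i = 0" using ST0[of i] unfolding Kw_def W_def by auto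
          then show "W i powr p = 0" by simp
        qed
      qed (use finKw in \<open>auto simp: Kw_def\<close>)
      finally show ?thesis .
    qed
    show ?thesis by (simp only: sum_divide_distrib[symmetric] n d)
  qed
  also have "\<dots> = pGMM D u v p"
    unfolding pGMM_def N_def mn_def W_def S_def T_def ..
  finally show ?thesis unfolding Eq_def N_def S_def T_def .
qed

end

lemma Gc_cong:
  assumes supp: "\<exists>k<N. 0 < s k"
    and eq: "\<And>k. k < N \<Longrightarrow> y (RI k) = y' (RI k) \<and> y (CI k) = y' (CI k) \<and> y (BI k) = y' (BI k)"
  shows "Gc N p s y = Gc N p s y'"
proof -
  have "GIc N p s y = GIc N p s y'"
    unfolding GIc_def by (rule argmin_cong) (simp add: GAc_def coordA_def eq)
  moreover have "GIc N p s y < N" using GI_in[OF supp] by blast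
  ultimately show ?thesis unfolding Gc_def GTc_def using eq by simp
qed

lemma measurable_count_space_restrict_range:
  fixes f :: "'a \<Rightarrow> 'b::countable"
  assumes "f \<in> Nm \<rightarrow>\<^sub>M count_space UNIV" "\<And>x. x \<in> space Nm \<Longrightarrow> f x \<in> I"
  shows "f \<in> Nm \<rightarrow>\<^sub>M count_space I"
  using assms by (auto simp: measurable_count_space_eq2_countable)

context
  fixes M :: "'w measure" and X :: "rv_idx \<Rightarrow> 'w \<Rightarrow> real" and D bb :: nat
  assumes P: "prob_space M"
    and ind: "prob_space.indep_vars M (\<lambda>_. borel) X (rv_indices D)"
    and hG: "\<And>k t m. k < 2*D \<Longrightarrow> m < 2^bb \<Longrightarrow>
           measure M {w \<in> space M. X (GI k t) w = real m} = 1 / 2^bb"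
begin

interpretation prob_space M by (rule P)

lemma rvG: "k < 2*D \<Longrightarrow> X (GI k t) \<in> borel_measurable M"
  using ind unfolding indep_vars_def by (auto simp: rv_indices_def)

lemma G_range_AE:
  assumes k: "k < 2*D"
  shows "AE \<omega> in M. X (GI k t) \<omega> \<in> real ` {..<2^bb}"
proof -
  note [measurable] = rvG[OF k]
  have "prob (\<Union>m\<in>{..<2^bb}. {\<omega> \<in> space M. X (GI k t) \<omega> = real m}) = (\<Sum>m\<in>{..<(2::nat)^bb}. prob {\<omega> \<in> space M. X (GI k t) \<omega> = real m})"
    by (intro finite_measure_finite_Union) (auto simp: disjoint_family_on_def)
  also have "\<dots> = (\<Sum>m\<in>{..<(2::nat)^bb}. 1 / 2^bb)" by (intro sum.cong) (auto simp: hG[OF k])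
  also have "\<dots> = 1" by simp
  finally have "AE \<omega> in M. \<omega> \<in> (\<Union>m\<in>{..<2^bb}. {\<omega> \<in> space M. X (GI k t) \<omega> = real m})"
    by (rule AE_prob_1)
  then show ?thesis by (rule eventually_mono) auto
qed

lemma gpair:
  assumes a: "fst a < 2*D" and b: "fst b < 2*D" and ab: "a \<noteq> b"
  shows "prob {\<omega> \<in> space M. X (GI (fst a) (snd a)) \<omega> = X (GI (fst b) (snd b)) \<omega>} = 1 / 2^bb"
proof -
  define A where "A = GI (fst a) (snd a)"
  define B where "B = GI (fst b) (snd b)"
  have AB: "A \<noteq> B" using ab unfolding A_def B_def by (cases a, cases b) auto
  note [measurable] = rvG[OF a] rvG[OF b]
  have mA[measurable]: "X A \<in> borel_measurable M" "X B \<in> borel_measurable M"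
    unfolding A_def B_def by measurable
  define U where "U = (\<Union>m\<in>{..<(2::nat)^bb}. {\<omega> \<in> space M. X A \<omega> = real m \<and> X B \<omega> = real m})"
  have AEr: "AE \<omega> in M. X A \<omega> \<in> real ` {..<2^bb}"
    unfolding A_def by (rule G_range_AE[OF a])
  have "AE \<omega> in M. \<omega> \<in> {\<omega> \<in> space M. X A \<omega> = X B \<omega>} \<longleftrightarrow> \<omega> \<in> U"
    using AEr by (rule eventually_mono) (auto simp: U_def)
  then have "prob {\<omega> \<in> space M. X A \<omega> = X B \<omega>} = prob U"
    by (intro measure_eq_AE) (auto simp: U_def)
  also have "\<dots> = (\<Sum>m\<in>{..<(2::nat)^bb}. prob {\<omega> \<in> space M. X A \<omega> = real m \<and> X B \<omega> = real m})"
    unfolding U_def by (intro finite_measure_finite_Union) (auto simp: disjoint_family_on_def)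
  also have "\<dots> = (\<Sum>m\<in>{..<(2::nat)^bb}. (1 / 2^bb) * (1 / 2^bb))"
  proof (intro sum.cong refl)
    fix m :: nat assume m: "m \<in> {..<2^bb}"
    have sub: "{A, B} \<subseteq> rv_indices D" using a b unfolding A_def B_def rv_indices_def by auto
    have "prob (\<Inter>i\<in>{A, B}. X i -` {real m} \<inter> space M) = (\<Prod>i\<in>{A, B}. prob (X i -` {real m} \<inter> space M))"
      by (rule indep_varsD[OF ind]) (use sub in auto)
    moreover have "(\<Inter>i\<in>{A, B}. X i -` {real m} \<inter> space M) = {\<omega> \<in> space M. X A \<omega> = real m \<and> X B \<omega> = real m}"
      by auto
    moreover have "prob (X A -` {real m} \<inter> space M) = 1 / 2^bb"
      using hG[OF a, of m "snd a"] m unfolding A_def by (simp add: vimage_def Int_def conj_commute)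
    moreover have "prob (X B -` {real m} \<inter> space M) = 1 / 2^bb"
      using hG[OF b, of m "snd b"] m unfolding B_def by (simp add: vimage_def Int_def conj_commute)
    ultimately show "prob {\<omega> \<in> space M. X A \<omega> = real m \<and> X B \<omega> = real m} = (1 / 2^bb) * (1 / 2^bb)"
      using AB by simp
  qed
  also have "\<dots> = 1 / 2^bb" by (simp add: power2_eq_square)
  finally show ?thesis unfolding A_def B_def .
qed

end

theorem theorem2:
  fixes M :: "'w measure" and X :: "rv_idx \<Rightarrow> 'w \<Rightarrow> real"
    and D b :: nat and p :: real and u v :: "nat \<Rightarrow> real"
  assumes "prob_space M"
    and "D \<ge> 1" and "p > 0" and "b \<ge> 1"
    and "\<exists>i<D. u i \<noteq> 0" and "\<exists>i<D. v i \<noteq> 0"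
    and "prob_space.indep_vars M (\<lambda>_. borel) X (rv_indices D)"
    and "\<And>k. k < 2*D \<Longrightarrow> distributed M lborel (X (RI k)) (\<lambda>x. ennreal (erlang_density 1 1 x))"
    and "\<And>k. k < 2*D \<Longrightarrow> distributed M lborel (X (CI k)) (\<lambda>x. ennreal (erlang_density 1 1 x))"
    and "\<And>k. k < 2*D \<Longrightarrow> distributed M lborel (X (BI k)) (\<lambda>x. indicator {0..1} x)"
    and "\<And>k t m. k < 2*D \<Longrightarrow> m < 2^b \<Longrightarrow>
           measure M {w \<in> space M. X (GI k t) w = real m} = 1 / 2^b"
  shows "measure M {w \<in> space M.
           (let r = (\<lambda>k. X (RI k) w); c = (\<lambda>k. X (CI k) w); beta = (\<lambda>k. X (BI k) w);
                (iu, tu) = gcws D p u r c beta; (iv, tv) = gcws D p v r c beta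
            in X (GI iu tu) w = X (GI iv tv) w)}
         = pGMM D u v p + (1 / 2^b) * (1 - pGMM D u v p)"
proof -
  note P = assms(1) and p = assms(3) and ind = assms(7) and dR = assms(8) and dC = assms(9)
    and dB = assms(10) and hG = assms(11)
  interpret prob_space M by (rule P)
  define N where "N = 2*D"
  have su: "\<exists>k<2*D. 0 < sign_split u k" by (rule sign_split_supp[OF assms(5)])
  have sv: "\<exists>k<2*D. 0 < sign_split v k" by (rule sign_split_supp[OF assms(6)])
  define Fu where "Fu y = Gc N p (sign_split u) y" for y
  define Fv where "Fv y = Gc N p (sign_split v) y" for y
  have gu: "gcws D p u (\<lambda>k. X (RI k) w) (\<lambda>k. X (CI k) w) (\<lambda>k. X (BI k) w) = Fu (\<lambda>i. X i w)" for w
    using gcws_Gc[of D p u "\<lambda>i. X i w"] unfolding Fu_def N_def by simp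
  have gv: "gcws D p v (\<lambda>k. X (RI k) w) (\<lambda>k. X (CI k) w) (\<lambda>k. X (BI k) w) = Fv (\<lambda>i. X i w)" for w
    using gcws_Gc[of D p v "\<lambda>i. X i w"] unfolding Fv_def N_def by simp
  define F where "F = {w \<in> space M. X (GI (fst (Fu (\<lambda>i. X i w))) (snd (Fu (\<lambda>i. X i w)))) w
                                 = X (GI (fst (Fv (\<lambda>i. X i w))) (snd (Fv (\<lambda>i. X i w)))) w}"
  have setF: "{w \<in> space M.
           (let r = (\<lambda>k. X (RI k) w); c = (\<lambda>k. X (CI k) w); beta = (\<lambda>k. X (BI k) w);
                (iu, tu) = gcws D p u r c beta; (iv, tv) = gcws D p v r c beta
            in X (GI iu tu) w = X (GI iv tv) w)} = F"
    unfolding F_def by (simp add: Let_def gu gv split_beta)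
  define J1 where "J1 = {i. \<exists>k<N. i = RI k \<or> i = CI k \<or> i = BI k}"
  define J2 where "J2 = {i. \<exists>k t. k < N \<and> i = GI k t}"
  have J1sub: "J1 \<subseteq> rv_indices D" unfolding J1_def rv_indices_def N_def by auto
  have J2sub: "J2 \<subseteq> rv_indices D" unfolding J2_def rv_indices_def N_def by auto
  have J12: "J1 \<inter> J2 = {}" unfolding J1_def J2_def by auto
  define Y1 where "Y1 \<omega> = restrict (\<lambda>i. X i \<omega>) J1" for \<omega>
  define Y2 where "Y2 \<omega> = restrict (\<lambda>i. X i \<omega>) J2" for \<omega>
  define S1 where "S1 = Pi\<^sub>M J1 (\<lambda>_. borel :: real measure)"
  define S2 where "S2 = Pi\<^sub>M J2 (\<lambda>_. borel :: real measure)"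
  have iv: "indep_var S1 Y1 S2 Y2"
    unfolding Y1_def Y2_def S1_def S2_def by (rule indep_var_restrict[OF ind J12 J1sub J2sub])
  have rv1[measurable]: "Y1 \<in> M \<rightarrow>\<^sub>M S1" and rv2[measurable]: "Y2 \<in> M \<rightarrow>\<^sub>M S2"
    using indep_var_rv1[OF iv] indep_var_rv2[OF iv] by auto
  have law: "distr M S1 Y1 \<Otimes>\<^sub>M distr M S2 Y2 = distr M (S1 \<Otimes>\<^sub>M S2) (\<lambda>\<omega>. (Y1 \<omega>, Y2 \<omega>))"
    using iv by (simp add: indep_var_distribution_eq)
  have suN: "\<exists>k<N. 0 < sign_split u k" "\<exists>k<N. 0 < sign_split v k" using su sv by (auto simp: N_def)
  have FuN: "fst (Fu y) < N" "fst (Fv y) < N" for y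
    using GI_in[OF suN(1)] GI_in[OF suN(2)] by (auto simp: Fu_def Fv_def Gc_def)
  have comp1: "(\<lambda>y. y (RI k)) \<in> borel_measurable S1" "(\<lambda>y. y (CI k)) \<in> borel_measurable S1"
      "(\<lambda>y. y (BI k)) \<in> borel_measurable S1" if "k < N" for k
    unfolding S1_def using that by (auto simp: J1_def)
  have mFu: "Fu \<in> S1 \<rightarrow>\<^sub>M count_space UNIV"
    unfolding Fu_def using measurable_Gc[OF suN(1), of "\<lambda>y. y" S1 p] comp1 by simp
  have mFv: "Fv \<in> S1 \<rightarrow>\<^sub>M count_space UNIV"
    unfolding Fv_def using measurable_Gc[OF suN(2), of "\<lambda>y. y" S1 p] comp1 by simp
  have eqY1: "Fu (Y1 \<omega>) = Fu (\<lambda>i. X i \<omega>)" "Fv (Y1 \<omega>) = Fv (\<lambda>i. X i \<omega>)" for \<omega>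
    unfolding Fu_def Fv_def Y1_def using suN
    by (auto intro!: Gc_cong simp: J1_def)
  have eqY2: "Y2 \<omega> (GI k t) = X (GI k t) \<omega>" if "k < N" for \<omega> k t
    unfolding Y2_def J2_def using that by auto
  define I where "I = {..<N} \<times> (UNIV :: int set)"
  have cI: "countable I" unfolding I_def by simp
  have hm: "(\<lambda>q. snd q (GI (fst (G (fst q))) (snd (G (fst q))))) \<in> borel_measurable (S1 \<Otimes>\<^sub>M S2)"
    if G: "G \<in> S1 \<rightarrow>\<^sub>M count_space UNIV" "\<And>y. fst (G y) < N" for G
  proof (rule measurable_compose_countable'[where I=I and g="\<lambda>q. G (fst q)" and f="\<lambda>i q. snd q (GI (fst i) (snd i))"])
    fix i assume "i \<in> I"
    then have "GI (fst i) (snd i) \<in> J2" unfolding I_def J2_def by auto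
    then show "(\<lambda>q. snd q (GI (fst i) (snd i))) \<in> borel_measurable (S1 \<Otimes>\<^sub>M S2)"
      unfolding S2_def by measurable
  next
    show "(\<lambda>q. G (fst q)) \<in> S1 \<Otimes>\<^sub>M S2 \<rightarrow>\<^sub>M count_space I"
    proof (rule measurable_count_space_restrict_range)
      show "(\<lambda>q. G (fst q)) \<in> S1 \<Otimes>\<^sub>M S2 \<rightarrow>\<^sub>M count_space UNIV"
        using G(1) by measurable
    qed (use G(2) in \<open>auto simp: I_def mem_Times_iff\<close>)
  qed (rule cI)
  note hmu[measurable] = hm[OF mFu FuN(1)] and hmv[measurable] = hm[OF mFv FuN(2)]
  define Q2 where "Q2 = {q \<in> space (S1 \<Otimes>\<^sub>M S2). snd q (GI (fst (Fu (fst q))) (snd (Fu (fst q))))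
                     = snd q (GI (fst (Fv (fst q))) (snd (Fv (fst q))))}"
  have Q2m: "Q2 \<in> sets (S1 \<Otimes>\<^sub>M S2)" unfolding Q2_def by measurable
  have sp: "(Y1 \<omega>, Y2 \<omega>) \<in> space (S1 \<Otimes>\<^sub>M S2)" if "\<omega> \<in> space M" for \<omega>
    using measurable_space[OF rv1 that] measurable_space[OF rv2 that] by (simp add: space_pair_measure)
  have evF: "F = (\<lambda>\<omega>. (Y1 \<omega>, Y2 \<omega>)) -` Q2 \<inter> space M"
    unfolding F_def Q2_def using sp by (auto simp: eqY1 eqY2 FuN)
  interpret Y2P: prob_space "distr M S2 Y2" by (rule prob_space_distr) (rule rv2)
  define Eq where "Eq = {\<omega>\<in>space M. Fu (\<lambda>i. X i \<omega>) = Fv (\<lambda>i. X i \<omega>)}"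
  have Eqm: "Eq \<in> sets M"
  proof -
    have "(\<lambda>\<omega>. Fu (Y1 \<omega>)) \<in> M \<rightarrow>\<^sub>M count_space UNIV" "(\<lambda>\<omega>. Fv (Y1 \<omega>)) \<in> M \<rightarrow>\<^sub>M count_space UNIV"
      using mFu mFv by measurable
    then have "{\<omega>\<in>space M. Fu (Y1 \<omega>) = Fv (Y1 \<omega>)} \<in> sets M" by measurable
    then show ?thesis unfolding Eq_def eqY1 .
  qed
  have pEq: "prob Eq = pGMM D u v p"
    unfolding Eq_def Fu_def Fv_def N_def by (rule prob_eq[OF P ind dR dC dB p su sv])
  have "emeasure M F = emeasure (distr M (S1 \<Otimes>\<^sub>M S2) (\<lambda>\<omega>. (Y1 \<omega>, Y2 \<omega>))) Q2"
    unfolding evF by (rule emeasure_distr[symmetric]) (measurable, rule Q2m)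
  also have "\<dots> = emeasure (distr M S1 Y1 \<Otimes>\<^sub>M distr M S2 Y2) Q2" unfolding law ..
  also have "\<dots> = (\<integral>\<^sup>+y1. emeasure (distr M S2 Y2) (Pair y1 -` Q2) \<partial>distr M S1 Y1)"
  proof (rule Y2P.emeasure_pair_measure_alt)
    have "sets (distr M S1 Y1 \<Otimes>\<^sub>M distr M S2 Y2) = sets (S1 \<Otimes>\<^sub>M S2)"
      by (intro sets_pair_measure_cong) auto
    then show "Q2 \<in> sets (distr M S1 Y1 \<Otimes>\<^sub>M distr M S2 Y2)" using Q2m by simp
  qed
  also have "\<dots> = (\<integral>\<^sup>+y1. ennreal (if Fu y1 = Fv y1 then 1 else 1 / 2^b) \<partial>distr M S1 Y1)"
  proof (intro nn_integral_cong)
    fix y1 assume y1: "y1 \<in> space (distr M S1 Y1)"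
    then have y1s: "y1 \<in> space S1" by simp
    have Pm: "Pair y1 -` Q2 \<in> sets S2" using sets_Pair1[OF Q2m] .
    define a where "a = Fu y1"
    define c where "c = Fv y1"
    have aN: "fst a < N" "fst c < N" unfolding a_def c_def using FuN by auto
    have "emeasure (distr M S2 Y2) (Pair y1 -` Q2) = emeasure M (Y2 -` (Pair y1 -` Q2) \<inter> space M)"
      by (rule emeasure_distr[OF rv2 Pm])
    also have "Y2 -` (Pair y1 -` Q2) \<inter> space M = {\<omega>\<in>space M. X (GI (fst a) (snd a)) \<omega> = X (GI (fst c) (snd c)) \<omega>}"
      using y1s measurable_space[OF rv2] aN by (auto simp: Q2_def space_pair_measure eqY2 a_def c_def)
    also have "emeasure M \<dots> = ennreal (if a = c then 1 else 1 / 2^b)"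
    proof (cases "a = c")
      case True
      then show ?thesis by (simp add: emeasure_space_1)
    next
      case False
      have "prob {\<omega>\<in>space M. X (GI (fst a) (snd a)) \<omega> = X (GI (fst c) (snd c)) \<omega>} = 1 / 2^b"
        by (rule gpair[OF P ind hG]) (use aN False in \<open>auto simp: N_def\<close>)
      then show ?thesis using False by (simp add: emeasure_eq_measure)
    qed
    finally show "emeasure (distr M S2 Y2) (Pair y1 -` Q2) = ennreal (if Fu y1 = Fv y1 then 1 else 1 / 2^b)"
      unfolding a_def c_def .
  qed
  also have "\<dots> = (\<integral>\<^sup>+\<omega>. ennreal (if Fu (Y1 \<omega>) = Fv (Y1 \<omega>) then 1 else 1 / 2^b) \<partial>M)"
    by (rule nn_integral_distr) (use mFu mFv in measurable)
  also have "\<dots> = (\<integral>\<^sup>+\<omega>. ennreal (1 / 2^b) + ennreal (1 - 1 / 2^b) * indicator Eq \<omega> \<partial>M)"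
  proof (intro nn_integral_cong)
    fix \<omega> assume \<omega>: "\<omega> \<in> space M"
    have le: "(1::real) / 2^b \<le> 1" by simp
    show "ennreal (if Fu (Y1 \<omega>) = Fv (Y1 \<omega>) then 1 else 1 / 2^b) = ennreal (1 / 2^b) + ennreal (1 - 1 / 2^b) * indicator Eq \<omega>"
      using \<omega> le by (auto simp: eqY1 Eq_def indicator_def ennreal_plus[symmetric] simp del: ennreal_plus)
  qed
  also have "\<dots> = ennreal (1 / 2^b) + ennreal (1 - 1 / 2^b) * emeasure M Eq"
    using Eqm by (simp add: nn_integral_add nn_integral_cmult emeasure_space_1)
  also have "\<dots> = ennreal (1 / 2^b + (1 - 1 / 2^b) * pGMM D u v p)"
  proof -
    have g0: "0 \<le> pGMM D u v p" using pEq by (metis measure_nonneg)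
    have le: "(1::real) / 2^b \<le> 1" by simp
    show ?thesis using Eqm pEq g0 le
      by (simp add: emeasure_eq_measure ennreal_mult[symmetric] ennreal_plus[symmetric] del: ennreal_plus)
  qed
  finally have "measure M F = 1 / 2^b + (1 - 1 / 2^b) * pGMM D u v p"
  proof -
    assume e: "emeasure M F = ennreal (1 / 2^b + (1 - 1 / 2^b) * pGMM D u v p)"
    have g0: "0 \<le> pGMM D u v p" using pEq by (metis measure_nonneg)
    have "0 \<le> 1 / 2^b + (1 - 1 / 2^b) * pGMM D u v p"
      using g0 by (intro add_nonneg_nonneg mult_nonneg_nonneg) auto
    then show ?thesis using e by (simp add: emeasure_eq_measure)
  qed
  moreover have "1 / 2^b + (1 - 1 / 2^b) * pGMM D u v p = pGMM D u v p + (1 / 2^b) * (1 - pGMM D u v p)"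
    by (simp add: right_diff_distrib left_diff_distrib)
  ultimately show ?thesis unfolding setF by simp
qed

end
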